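(* For every $n\ge1$, the map $f\colon\mathcal{T}_n(P,e)\to\mathcal{M}'_{n-1}(Z)$ is a bijection in each of the following four cases: (i) $(P,e)=(2134,111)$, $Z=\{\mathtt{U}\mathtt{U},\mathtt{U}\mathtt{F}_R\}$; (ii) $(P,e)=(3214,111)$, $Z=\{\mathtt{D}\mathtt{U},\mathtt{D}\mathtt{F}_L\}$; (iii) $(P,e)=(1324,111)$, $Z=\{\mathtt{U}\mathtt{U},\mathtt{F}_R\mathtt{U}\}$; (iv) $(P,e)=(1243,111)$, $Z=\{\mathtt{U},\mathtt{F}_R\}\times\{\mathtt{U},\mathtt{F}_R\}\times\{\mathtt{U},\mathtt{F}_L\}$ (all 8 three-letter words $xyz$ with $x,y\in\{\mathtt U,\mathtt F_R\}$, $z\in\{\mathtt U,\mathtt F_L\}$). Moreover, $(2134,111)=(2134,\text{-}1\text{-})$, $(3214,111)=(3214,1\text{-}\text{-})$, $(1324,111)=(1324,1\text{-}\text{-})$ and $(1243,111)=(1243,1\text{-}\text{-})$ in the sense that the set of avoiding trees does not change when the entries marked "-" are replaced by arbitrary values in $\{0,1\}$. Furthermore, for each $n\ge1$ these four sets of Motzkin paths have the same cardinality, and these cardinalities form the sequence OEIS A025242, whose terms for $n=1,2,3,\dots$ are $1,2,5,13,35,97,275,794,2327,6905,\dots$.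
   Context: $\mathcal{T}_n$ is the set of binary trees on $n$ vertices labeled $1,\dots,n$ by the search tree property; $r(T)$ root, $L(T),R(T)$ the left and right subtrees of the root, $c_L,c_R,p$ left child, right child, parent. A tree pattern is $(P,e)$, $P\in\mathcal{T}_k$, $e\colon[k]\setminus\{r(P)\}\to\{0,1\}$; $T$ contains $(P,e)$ if there is an injection $f\colon[k]\to[n]$ such that for each non-root $i$ of $P$: if $e(i)=1$, $f(i)$ is the left (resp. right) child of $f(p(i))$ when $i$ is the left (resp. right) child of $p(i)$; if $e(i)=0$, $f(i)$ lies in the left (resp. right) subtree of $f(p(i))$. $\mathcal{T}_n(P,e)$ is the set of avoiders. Compact notation: $(\tau_1\cdots\tau_k,\,x_2\cdots x_k)$ denotes the pattern $(P,e)$ whose preorder sequence (root, then recursively left subtree, then right subtree) is $\tau_1,\dots,\tau_k$ and with $e(\tau_j)=x_j$. Motzkin paths with 2-colored flat steps: words over $\{\mathtt U,\mathtt D,\mathtt F_L,\mathtt F_R\}$ where $\mathtt U=(1,1)$, $\mathtt D=(1,-1)$, $\mathtt F_L,\mathtt F_R=(1,0)$, starting at $(0,0)$, ending on the $x$-axis, never going below it; $\mathcal{M}'_m$ is the set of such paths with $m$ steps, and $\mathcal{M}'_m(Z)$ those containing no word of $Z$ as a consecutive substring. The map $f$ on nonempty binary trees: if $r(T)$ has no children, $f(T)$ is the empty path; if it has only a left child, $f(T)=\mathtt F_L\,f(L(T))$; if only a right child, $f(T)=\mathtt F_R\,f(R(T))$; if two children, $f(T)=\mathtt U\,f(R(T))\,\mathtt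 D\,f(L(T))$. *)

theory Defs
  imports Main "HOL-Library.Tree" "HOL-Library.Sublist"
begin

definition bsts :: "nat \<Rightarrow> nat tree set" where
  "bsts n = {T. inorder T = [1..<n+1]}"

definition is_lchild :: "nat tree \<Rightarrow> nat \<Rightarrow> nat \<Rightarrow> bool" where
  "is_lchild T a b \<longleftrightarrow> (\<exists>l' r' r. Node (Node l' b r') a r \<in> subtrees T)"

definition is_rchild :: "nat tree \<Rightarrow> nat \<Rightarrow> nat \<Rightarrow> bool" where
  "is_rchild T a b \<longleftrightarrow> (\<exists>l l' r'. Node l a (Node l' b r') \<in> subtrees T)"

definition in_lsub :: "nat tree \<Rightarrow> nat \<Rightarrow> nat \<Rightarrow> bool" where
  "in_lsub T a b \<longleftrightarrow> (\<exists>l r. Node l a r \<in> subtrees T \<and> b \<in> set_tree l)"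

definition in_rsub :: "nat tree \<Rightarrow> nat \<Rightarrow> nat \<Rightarrow> bool" where
  "in_rsub T a b \<longleftrightarrow> (\<exists>l r. Node l a r \<in> subtrees T \<and> b \<in> set_tree r)"

text \<open>Only the values of e on non-root vertices matter.\<close>
definition contains :: "nat tree \<Rightarrow> nat tree \<Rightarrow> (nat \<Rightarrow> bool) \<Rightarrow> bool" where
  "contains T P e \<longleftrightarrow> (\<exists>f. inj_on f (set_tree P) \<and> f ` set_tree P \<subseteq> set_tree T \<and>
     (\<forall>l a r. Node l a r \<in> subtrees P \<longrightarrow>
        (\<forall>l' b r'. l = Node l' b r' \<longrightarrow>
            (if e b then is_lchild T (f a) (f b) else in_lsub T (f a) (f b))) \<and>
        (\<forall>l' b r'. r = Node l' b r' \<longrightarrow>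
            (if e b then is_rchild T (f a) (f b) else in_rsub T (f a) (f b)))))"

definition avoiders :: "nat \<Rightarrow> nat tree \<Rightarrow> (nat \<Rightarrow> bool) \<Rightarrow> nat tree set" where
  "avoiders n P e = {T \<in> bsts n. \<not> contains T P e}"

text \<open>Compact notation (tau_1...tau_k, x_2...x_k): the search tree with preorder
  sequence tau, and e(tau_j) = x_j for j \<ge> 2.\<close>
fun bst_of_preorder :: "nat list \<Rightarrow> nat tree" where
  "bst_of_preorder [] = Leaf"
| "bst_of_preorder (x # xs) =
     Node (bst_of_preorder (filter (\<lambda>y. y < x) xs)) x (bst_of_preorder (filter (\<lambda>y. x < y) xs))"

definition pat_tree :: "nat list \<Rightarrow> nat tree" where
  "pat_tree tau = bst_of_preorder tau"

definition pat_e :: "nat list \<Rightarrow> bool list \<Rightarrow> nat \<Rightarrow> bool" where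
  "pat_e tau xs = (\<lambda>i. map_of (zip (tl tau) xs) i = Some True)"

definition avoiders_c :: "nat \<Rightarrow> nat list \<Rightarrow> bool list \<Rightarrow> nat tree set" where
  "avoiders_c n tau xs = avoiders n (pat_tree tau) (pat_e tau xs)"

datatype step = U | D | FL | FR

fun step_height :: "step \<Rightarrow> int" where
  "step_height U = 1"
| "step_height D = -1"
| "step_height FL = 0"
| "step_height FR = 0"

definition motzkin :: "step list \<Rightarrow> bool" where
  "motzkin w \<longleftrightarrow> (\<forall>k \<le> length w. 0 \<le> sum_list (map step_height (take k w)))
                   \<and> sum_list (map step_height w) = 0"

definition motzkin_avoid :: "nat \<Rightarrow> step list set \<Rightarrow> step list set" where
  "motzkin_avoid m Z = {w. length w = m \<and> motzkin w \<and> (\<forall>z \<in> Z. \<not> sublist z w)}"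

fun fpath :: "'a tree \<Rightarrow> step list" where
  "fpath Leaf = []"
| "fpath (Node Leaf _ Leaf) = []"
| "fpath (Node l _ Leaf) = FL # fpath l"
| "fpath (Node Leaf _ r) = FR # fpath r"
| "fpath (Node l _ r) = U # fpath r @ [D] @ fpath l"

text \<open>a n is the n-th term (n = 1,2,3,...: 1,2,5,13,35,...).  With
  A(x) = sum_{n\<ge>1} a n x^(n-1) the generating function satisfies
  A = 1 + (2x + x^2) A + x^3 A^2, i.e. A(x) = (1-2x-x^2-sqrt(1-4x+2x^2+x^4))/(2x^3),
  the generating function of A025242 (shifted).  a25242_aux m = a (m+1).\<close>
fun a25242_aux :: "nat \<Rightarrow> nat" where
  "a25242_aux 0 = 1"
| "a25242_aux (Suc 0) = 2"
| "a25242_aux (Suc (Suc 0)) = 5"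
| "a25242_aux (Suc (Suc (Suc m))) =
     2 * a25242_aux (Suc (Suc m)) + a25242_aux (Suc m) + (\<Sum>i\<le>m. a25242_aux i * a25242_aux (m - i))"

definition A025242 :: "nat \<Rightarrow> nat" where
  "A025242 n = a25242_aux (n - 1)"

end

theory Submission
  imports Defs
begin


fun ok :: "int \<Rightarrow> step list \<Rightarrow> bool" where
  "ok h [] = (h = 0)"
| "ok h (x # xs) = (0 \<le> h \<and> ok (h + step_height x) xs)"

lemma all_le_Suc_split: "(\<forall>k\<le>Suc n. P k) \<longleftrightarrow> P 0 \<and> (\<forall>k\<le>n. P (Suc k))"
  by (metis Suc_le_mono le0 not0_implies_Suc)

lemma ok_iff: "ok h w \<longleftrightarrow> (\<forall>k\<le>length w. 0 \<le> h + sum_list (map step_height (take k w)))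
                   \<and> h + sum_list (map step_height w) = 0"
proof (induction w arbitrary: h)
  case Nil
  then show ?case by auto
next
  case (Cons x xs)
  show ?case
    unfolding ok.simps Cons.IH length_Cons all_le_Suc_split
    by (simp add: add.assoc)
qed

lemma motzkin_ok: "motzkin w \<longleftrightarrow> ok 0 w"
  unfolding motzkin_def ok_iff by simp

inductive M :: "step list \<Rightarrow> bool" where
  M_Nil: "M []"
| M_FL: "M w \<Longrightarrow> M (FL # w)"
| M_FR: "M w \<Longrightarrow> M (FR # w)"
| M_U: "M u \<Longrightarrow> M v \<Longrightarrow> M (U # u @ D # v)"

fun Mh :: "nat \<Rightarrow> step list \<Rightarrow> bool" where
  "Mh 0 w = M w"
| "Mh (Suc h) w = (\<exists>u v. w = u @ D # v \<and> M u \<and> Mh h v)"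

lemma ok_nonneg: "ok h w \<Longrightarrow> 0 \<le> h"
  by (cases w) auto

lemma M_ok: "M u \<Longrightarrow> ok h v \<Longrightarrow> ok h (u @ v)"
proof (induction arbitrary: h v rule: M.induct)
  case M_Nil then show ?case by simp
next
  case (M_FL w) then show ?case using ok_nonneg by auto
next
  case (M_FR w) then show ?case using ok_nonneg by auto
next
  case (M_U u v')
  have "ok h (v' @ v)" using M_U by blast
  then have "ok (h + 1) (D # v' @ v)" using ok_nonneg by auto
  then have "ok (h+1) (u @ D # v' @ v)" using M_U by blast
  then show ?case using ok_nonneg M_U by auto
qed

lemma Mh_F: assumes "Mh h w" shows "Mh h (FL # w) \<and> Mh h (FR # w)"
proof (cases h)
  case 0
  then show ?thesis using assms by (auto intro: M.intros)
next
  case (Suc h')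
  from assms obtain u v where "w = u @ D # v" "M u" "Mh h' v" using Suc by auto
  then have "FL # w = (FL # u) @ D # v" "FR # w = (FR # u) @ D # v" "M (FL # u)" "M (FR # u)"
    by (auto intro: M.intros)
  then show ?thesis unfolding Suc Mh.simps using \<open>Mh h' v\<close> by blast
qed

lemma Mh_U: assumes "M u" "Mh h v" shows "Mh h (U # u @ D # v)"
proof (cases h)
  case 0
  then show ?thesis using assms by (auto intro: M.intros)
next
  case (Suc h')
  from assms obtain u' v' where "v = u' @ D # v'" "M u'" "Mh h' v'" using Suc by auto
  then have "U # u @ D # v = (U # u @ D # u') @ D # v'" "M (U # u @ D # u')"
    using \<open>M u\<close> by (auto intro: M.intros)
  then show ?thesis unfolding Suc Mh.simps using \<open>Mh h' v'\<close> by blast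
qed

lemma ok_Mh: "ok (int h) w \<Longrightarrow> Mh h w"
proof (induction w arbitrary: h)
  case Nil
  then show ?case by (auto intro: M.intros)
next
  case (Cons x xs)
  show ?case
  proof (cases x)
    case U
    then have "ok (int (Suc h)) xs" using Cons.prems by (simp add: add.commute)
    then have "Mh (Suc h) xs" using Cons.IH by blast
    then obtain u v where "xs = u @ D # v" "M u" "Mh h v" by auto
    then show ?thesis using U Mh_U by simp
  next
    case D
    then have o: "ok (int h - 1) xs" using Cons.prems by simp
    then have "int h \<ge> 1" using ok_nonneg by force
    then obtain h' where h': "h = Suc h'" by (cases h) auto
    then have "Mh h' xs" using Cons.IH o by simp
    moreover have "D # xs = [] @ D # xs" "M []" by (auto intro: M.intros)
    ultimately show ?thesis unfolding D h' Mh.simps by blast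
  next
    case FL
    then show ?thesis using Cons Mh_F by auto
  next
    case FR
    then show ?thesis using Cons Mh_F by auto
  qed
qed

lemma motzkin_M: "motzkin w \<longleftrightarrow> M w"
proof
  assume "motzkin w" then show "M w" using ok_Mh[of 0 w] motzkin_ok by simp
next
  assume "M w" then show "motzkin w" using M_ok[of w 0 "[]"] motzkin_ok by simp
qed

lemma M_ok_drop: "M u \<Longrightarrow> ok h (u @ w) \<Longrightarrow> ok h w"
proof (induction arbitrary: h w rule: M.induct)
  case M_Nil then show ?case by simp
next
  case (M_FL u) then show ?case by (metis append_Cons ok.simps(2) step_height.simps(3) add_0_right)
next
  case (M_FR u) then show ?case by (metis append_Cons ok.simps(2) step_height.simps(4) add_0_right)
next
  case (M_U u v)
  from M_U.prems have "ok (h+1) (u @ (D # v @ w))" by simp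
  then have "ok (h+1) (D # v @ w)" using M_U.IH(1) by blast
  then have "ok h (v @ w)" by simp
  then show ?case using M_U.IH(2) by blast
qed

lemma M_no_D: "M u \<Longrightarrow> M (u @ D # x) \<Longrightarrow> False"
proof -
  assume a: "M u" "M (u @ D # x)"
  then have "ok 0 (u @ D # x)" using motzkin_M motzkin_ok by blast
  then have "ok 0 (D # x)" using M_ok_drop a by blast
  then have "ok (-1) x" by simp
  then show False using ok_nonneg[of "-1" x] by simp
qed

lemma M_unique: "M u \<Longrightarrow> M u' \<Longrightarrow> u @ D # v = u' @ D # v' \<Longrightarrow> u = u' \<and> v = v'"
proof -
  assume a: "M u" "M u'" and e: "u @ D # v = u' @ D # v'"
  from e obtain us where "u = u' @ us \<and> us @ D # v = D # v' \<or> u @ us = u' \<and> D # v = us @ D # v'"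
    using append_eq_append_conv2[of u "D # v" u' "D # v'"] by blast
  then show ?thesis
  proof
    assume h: "u = u' @ us \<and> us @ D # v = D # v'"
    show ?thesis
    proof (cases us)
      case Nil then show ?thesis using h by simp
    next
      case (Cons y ys)
      then have "u = u' @ D # ys" using h by simp
      then show ?thesis using M_no_D a by blast
    qed
  next
    assume h: "u @ us = u' \<and> D # v = us @ D # v'"
    show ?thesis
    proof (cases us)
      case Nil then show ?thesis using h by simp
    next
      case (Cons y ys)
      then have "u' = u @ D # ys" using h by auto
      then show ?thesis using M_no_D a by blast
    qed
  qed
qed

lemma fpath_Node: "fpath (Node l a r) = (if l = Leaf then (if r = Leaf then [] else FR # fpath r)
   else if r = Leaf then FL # fpath l else U # fpath r @ D # fpath l)"
  by (cases l; cases r) auto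

lemma M_fpath: "M (fpath T)"
  by (induction T) (auto simp: fpath_Node intro: M.intros)

lemma length_fpath: "T \<noteq> Leaf \<Longrightarrow> Suc (length (fpath T)) = size T"
  by (induction T) (auto simp: fpath_Node)

lemma fpath_map: "fpath (map_tree g T) = fpath T"
  by (induction T) (auto simp: fpath_Node)

lemma fpath_inj_shape: "T1 \<noteq> Leaf \<Longrightarrow> T2 \<noteq> Leaf \<Longrightarrow> fpath T1 = fpath T2 \<Longrightarrow>
   map_tree (\<lambda>_. ()) T1 = map_tree (\<lambda>_. ()) T2"
proof (induction T1 arbitrary: T2)
  case Leaf then show ?case by simp
next
  case (Node l a r)
  obtain l' a' r' where T2: "T2 = Node l' a' r'" using Node.prems by (cases T2) auto
  have e: "fpath (Node l a r) = fpath (Node l' a' r')" using Node.prems T2 by simp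
  have IHl: "fpath l = fpath l' \<Longrightarrow> l \<noteq> Leaf \<Longrightarrow> l' \<noteq> Leaf \<Longrightarrow> map_tree (\<lambda>_. ()) l = map_tree (\<lambda>_. ()) l'"
    using Node.IH(1) by blast
  have IHr: "fpath r = fpath r' \<Longrightarrow> r \<noteq> Leaf \<Longrightarrow> r' \<noteq> Leaf \<Longrightarrow> map_tree (\<lambda>_. ()) r = map_tree (\<lambda>_. ()) r'"
    using Node.IH(2) by blast
  consider "l = Leaf" "r = Leaf" | "l = Leaf" "r \<noteq> Leaf" | "l \<noteq> Leaf" "r = Leaf" | "l \<noteq> Leaf" "r \<noteq> Leaf"
    by blast
  then show ?case
  proof cases
    case 1
    then show ?thesis using e T2 by (simp only: fpath_Node) (simp split: if_splits)
  next
    case 2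
    then have "l' = Leaf \<and> r' \<noteq> Leaf \<and> fpath r = fpath r'" using e by (simp only: fpath_Node) (simp split: if_splits)
    then show ?thesis using 2 T2 IHr by simp
  next
    case 3
    then have "l' \<noteq> Leaf \<and> r' = Leaf \<and> fpath l = fpath l'" using e by (simp only: fpath_Node) (simp split: if_splits)
    then show ?thesis using 3 T2 IHl by simp
  next
    case 4
    then have "l' \<noteq> Leaf \<and> r' \<noteq> Leaf \<and> fpath r @ D # fpath l = fpath r' @ D # fpath l'"
      using e by (simp only: fpath_Node) (simp split: if_splits)
    moreover then have "fpath r = fpath r' \<and> fpath l = fpath l'" using M_unique[OF M_fpath[of r] M_fpath[of r']] by blast
    ultimately show ?thesis using 4 T2 IHl IHr by simp
  qed
qed

lemma tree_eq_shape_inorder: "map_tree (\<lambda>_. ()) T1 = map_tree (\<lambda>_. ()) T2 \<Longrightarrow> inorder T1 = inorder T2 \<Longrightarrow> T1 = T2"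
proof (induction T1 arbitrary: T2)
  case Leaf then show ?case by simp
next
  case (Node l a r)
  obtain l' a' r' where T2: "T2 = Node l' a' r'" using Node.prems by (cases T2) auto
  have sh: "map_tree (\<lambda>_. ()) l = map_tree (\<lambda>_. ()) l'" "map_tree (\<lambda>_. ()) r = map_tree (\<lambda>_. ()) r'"
    using Node.prems T2 by auto
  then have "size l = size l'" by (metis size_map_tree)
  then have "inorder l = inorder l' \<and> a = a' \<and> inorder r = inorder r'"
    using Node.prems(2) T2 by (simp add: append_eq_append_conv)
  then show ?case using Node.IH sh T2 by auto
qed

lemma M_surj: "M w \<Longrightarrow> \<exists>T. inorder T = [k..<k + length w + 1] \<and> fpath T = w"
proof (induction arbitrary: k rule: M.induct)
  case M_Nil
  show ?case by (intro exI[of _ "Node Leaf k Leaf"]) simp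
next
  case (M_FL w)
  obtain T where T: "inorder T = [k..<k + length w + 1]" "fpath T = w" using M_FL by blast
  then have "T \<noteq> Leaf" by auto
  moreover have "[k..<k + length (FL # w) + 1] = [k..<k + length w + 1] @ [k + length w + 1]"
    by (simp add: upt_Suc_append del: upt_Suc)
  ultimately show ?case using T
    by (intro exI[of _ "Node T (k + length w + 1) Leaf"]) (simp add: fpath_Node del: upt_Suc)
next
  case (M_FR w)
  obtain T where T: "inorder T = [Suc k..<Suc k + length w + 1]" "fpath T = w" using M_FR by blast
  then have "T \<noteq> Leaf" by auto
  moreover have "[k..<k + length (FR # w) + 1] = k # [Suc k..<Suc k + length w + 1]"
    by (simp add: upt_conv_Cons del: upt_Suc)
  ultimately show ?case using T
    by (intro exI[of _ "Node Leaf k T"]) (simp add: fpath_Node del: upt_Suc)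
next
  case (M_U u v)
  obtain R where R: "inorder R = [k + length v + 2..<k + length v + 2 + length u + 1]" "fpath R = u"
    using M_U by blast
  obtain L where L: "inorder L = [k..<k + length v + 1]" "fpath L = v" using M_U by blast
  have ne: "L \<noteq> Leaf" "R \<noteq> Leaf" using L R by auto
  have "[k..<k + length v + 1] @ (k + length v + 1) # [k + length v + 2..<k + length v + 2 + length u + 1]
        = [k..<k + length (U # u @ D # v) + 1]"
  proof -
    have eq: "k + length (U # u @ D # v) + 1 = (k + length v + 1) + (length u + 2)" by simp
    have A: "[k..<(k + length v + 1) + (length u + 2)] = [k..<k + length v + 1] @ [k + length v + 1..<(k + length v + 1) + (length u + 2)]"
      by (rule upt_add_eq_append) simp
    have B: "[k + length v + 1..<(k + length v + 1) + (length u + 2)] = (k + length v + 1) # [k + length v + 2..<k + length v + 2 + length u + 1]"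
      by (simp add: upt_conv_Cons del: upt_Suc)
    show ?thesis by (simp only: eq A B)
  qed
  then show ?case using L R ne
    by (intro exI[of _ "Node L (k + length v + 1) R"]) (simp add: fpath_Node)
qed

lemma bsts_size: "T \<in> bsts n \<Longrightarrow> size T = n"
  unfolding bsts_def by (metis length_inorder length_upt diff_add_inverse2 mem_Collect_eq)

lemma bij_bsts: "n \<ge> 1 \<Longrightarrow> bij_betw fpath (bsts n) {w. length w = n - 1 \<and> motzkin w}"
  unfolding bij_betw_def
proof (intro conjI)
  assume n: "n \<ge> 1"
  show "inj_on fpath (bsts n)"
  proof (rule inj_onI)
    fix x y assume xy: "x \<in> bsts n" "y \<in> bsts n" "fpath x = fpath y"
    then have "x \<noteq> Leaf" "y \<noteq> Leaf" using n bsts_size by fastforce+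
    moreover have "inorder x = inorder y" using xy unfolding bsts_def by simp
    ultimately show "x = y" using xy fpath_inj_shape tree_eq_shape_inorder by blast
  qed
  show "fpath ` bsts n = {w. length w = n - 1 \<and> motzkin w}"
  proof
    show "fpath ` bsts n \<subseteq> {w. length w = n - 1 \<and> motzkin w}"
    proof
      fix w assume "w \<in> fpath ` bsts n"
      then obtain T where T: "T \<in> bsts n" "w = fpath T" by auto
      then have "T \<noteq> Leaf" "size T = n" using n bsts_size by fastforce+
      then show "w \<in> {w. length w = n - 1 \<and> motzkin w}"
        using T length_fpath[of T] M_fpath motzkin_M by force
    qed
  next
    show "{w. length w = n - 1 \<and> motzkin w} \<subseteq> fpath ` bsts n"
    proof
      fix w assume "w \<in> {w. length w = n - 1 \<and> motzkin w}"
      then have w: "length w = n - 1" "M w" using motzkin_M by auto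
      then obtain T where "inorder T = [1..<1 + length w + 1]" "fpath T = w" using M_surj by blast
      then show "w \<in> fpath ` bsts n" using w n unfolding bsts_def by (auto intro!: image_eqI[of _ _ T])
    qed
  qed
qed

lemma map_unit: "map_tree (\<lambda>_. ()) (T :: unit tree) = T"
  by (induction T) auto

lemma bij_unit: "n \<ge> 1 \<Longrightarrow> bij_betw fpath {T :: unit tree. size T = n} {w. length w = n - 1 \<and> motzkin w}"
  unfolding bij_betw_def
proof (intro conjI)
  assume n: "n \<ge> 1"
  show "inj_on fpath {T :: unit tree. size T = n}"
  proof (rule inj_onI)
    fix x y :: "unit tree" assume xy: "x \<in> {T. size T = n}" "y \<in> {T. size T = n}" "fpath x = fpath y"
    then have "x \<noteq> Leaf" "y \<noteq> Leaf" using n by auto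
    then show "x = y" using xy fpath_inj_shape[of x y] map_unit by metis
  qed
  show "fpath ` {T :: unit tree. size T = n} = {w. length w = n - 1 \<and> motzkin w}"
  proof
    show "fpath ` {T :: unit tree. size T = n} \<subseteq> {w. length w = n - 1 \<and> motzkin w}"
    proof
      fix w assume "w \<in> fpath ` {T :: unit tree. size T = n}"
      then obtain T :: "unit tree" where T: "size T = n" "w = fpath T" by auto
      then have "T \<noteq> Leaf" using n by auto
      then show "w \<in> {w. length w = n - 1 \<and> motzkin w}"
        using T length_fpath[of T] M_fpath motzkin_M by force
    qed
  next
    show "{w. length w = n - 1 \<and> motzkin w} \<subseteq> fpath ` {T :: unit tree. size T = n}"
    proof
      fix w assume "w \<in> {w. length w = n - 1 \<and> motzkin w}"
      then have w: "length w = n - 1" "M w" using motzkin_M by auto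
      then obtain T :: "nat tree" where T: "inorder T = [1..<1 + length w + 1]" "fpath T = w" using M_surj by blast
      then have "size T = n" using w n by (metis length_inorder length_upt add_diff_cancel_left' add.commute le_add_diff_inverse2)
      then show "w \<in> fpath ` {T :: unit tree. size T = n}" using T
        by (auto intro!: image_eqI[of _ _ "map_tree (\<lambda>_. ()) T"] simp: fpath_map)
    qed
  qed
qed

lemma bij_restrict: "bij_betw f A B \<Longrightarrow> (\<And>x. x \<in> A \<Longrightarrow> P x \<longleftrightarrow> Q (f x)) \<Longrightarrow>
  bij_betw f {x \<in> A. P x} {y \<in> B. Q y}"
  unfolding bij_betw_def inj_on_def by auto


definition bad :: "('a tree \<Rightarrow> bool) \<Rightarrow> 'a tree \<Rightarrow> bool" where
  "bad g T = (\<exists>S\<in>subtrees T. g S)"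

definition good1 :: "'a tree \<Rightarrow> bool" where
  "good1 S = (\<exists>l a rl c rr. S = Node l a (Node rl c rr) \<and> l \<noteq> Leaf \<and> rr \<noteq> Leaf)"
definition good2 :: "'a tree \<Rightarrow> bool" where
  "good2 S = (\<exists>ll b lr a r. S = Node (Node ll b lr) a r \<and> ll \<noteq> Leaf \<and> r \<noteq> Leaf)"
definition good3 :: "'a tree \<Rightarrow> bool" where
  "good3 S = (\<exists>l a rl c rr. S = Node l a (Node rl c rr) \<and> rl \<noteq> Leaf \<and> rr \<noteq> Leaf)"
definition good4 :: "'a tree \<Rightarrow> bool" where
  "good4 S = (\<exists>l a l2 b l3 c r3. S = Node l a (Node l2 b (Node l3 c r3)) \<and> l3 \<noteq> Leaf)"

lemma bad_Leaf[simp]: "bad g Leaf = g Leaf"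
  by (simp add: bad_def)
lemma bad_Node: "bad g (Node l a r) = (g (Node l a r) \<or> bad g l \<or> bad g r)"
  by (auto simp: bad_def)

lemma good_Leaf[simp]: "\<not> good1 Leaf" "\<not> good2 Leaf" "\<not> good3 Leaf" "\<not> good4 Leaf"
  by (auto simp: good1_def good2_def good3_def good4_def)

lemma fp_LL: "fpath (Node Leaf a Leaf) = []" by simp
lemma fp_L: "l \<noteq> Leaf \<Longrightarrow> fpath (Node l a Leaf) = FL # fpath l" by (cases l) auto
lemma fp_R: "r \<noteq> Leaf \<Longrightarrow> fpath (Node Leaf a r) = FR # fpath r" by (cases r) auto
lemma fp_LR: "l \<noteq> Leaf \<Longrightarrow> r \<noteq> Leaf \<Longrightarrow> fpath (Node l a r) = U # fpath r @ D # fpath l"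
  by (cases l; cases r) auto

lemma node_cases:
  obtains "l = Leaf" "r = Leaf" | "l \<noteq> Leaf" "r = Leaf" | "l = Leaf" "r \<noteq> Leaf" | "l \<noteq> Leaf" "r \<noteq> Leaf"
  by blast

lemma prefix1_fpath:
  "prefix [x] (fpath T) \<longleftrightarrow>
     (\<exists>l a r. T = Node l a r \<and> (x = U \<and> l \<noteq> Leaf \<and> r \<noteq> Leaf \<or> x = FL \<and> l \<noteq> Leaf \<and> r = Leaf
        \<or> x = FR \<and> l = Leaf \<and> r \<noteq> Leaf))"
proof (cases T)
  case Leaf then show ?thesis by simp
next
  case (Node l a r)
  then show ?thesis
    by (cases l r rule: node_cases) (auto simp: fp_L fp_R fp_LR)
qed

lemma prefix_noD: "D \<notin> set z \<Longrightarrow> prefix z (u @ D # v) \<longleftrightarrow> prefix z u"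
proof
  assume a: "D \<notin> set z" "prefix z (u @ D # v)"
  then obtain us where "prefix z u \<or> z = u @ us \<and> prefix us (D # v)" by (auto simp: prefix_append)
  then show "prefix z u"
  proof
    assume "z = u @ us \<and> prefix us (D # v)"
    then have "us = []" using a(1) by (cases us) auto
    then show ?thesis using \<open>z = u @ us \<and> prefix us (D # v)\<close> by simp
  qed
next
  assume "prefix z u" then show "prefix z (u @ D # v)" by (metis prefix_append)
qed

lemma sub_noD: "D \<notin> set z \<Longrightarrow> sublist z (u @ D # v) \<longleftrightarrow> sublist z u \<or> sublist z v"
proof (induction u)
  case Nil
  have "prefix z (D # v) \<Longrightarrow> z = []" using Nil by (cases z) auto
  then show ?case by (auto simp: sublist_Cons_right)
next
  case (Cons x u)
  have "sublist z ((x # u) @ D # v) \<longleftrightarrow> prefix z (x # u @ D # v) \<or> sublist z (u @ D # v)"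
    by (simp add: sublist_Cons_right)
  also have "\<dots> \<longleftrightarrow> prefix z (x # u) \<or> sublist z (u @ D # v)"
    using prefix_noD[OF Cons.prems, of "x # u" v] by simp
  also have "\<dots> \<longleftrightarrow> sublist z (x # u) \<or> sublist z v"
    using Cons by (auto simp: sublist_Cons_right)
  finally show ?case .
qed

lemma sub_D2: "y \<noteq> D \<Longrightarrow> sublist [D,y] (u @ D # v) \<longleftrightarrow> sublist [D,y] u \<or> prefix [y] v \<or> sublist [D,y] v"
proof (induction u)
  case Nil
  then show ?case by (auto simp: sublist_Cons_right)
next
  case (Cons x u)
  have "sublist [D,y] ((x # u) @ D # v) \<longleftrightarrow> prefix [D,y] (x # u @ D # v) \<or> sublist [D,y] (u @ D # v)"
    by (simp add: sublist_Cons_right)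
  also have "prefix [D,y] (x # u @ D # v) \<longleftrightarrow> prefix [D,y] (x # u)"
    using prefix_noD[of "[y]" u v] Cons.prems by simp
  finally show ?case using Cons by (auto simp: sublist_Cons_right)
qed

lemma sub_Cons_notprefix: "\<not> prefix z (x # w) \<Longrightarrow> sublist z (x # w) \<longleftrightarrow> sublist z w"
  by (simp add: sublist_Cons_right)


lemma sub_U_both: "sublist z (U # u @ D # v) \<longleftrightarrow> prefix z (U # u @ D # v) \<or> sublist z (u @ D # v)"
  by (simp add: sublist_Cons_right)

lemma path1: "(sublist [U,U] (fpath T) \<or> sublist [U,FR] (fpath T)) \<longleftrightarrow> bad good1 T"
proof (induction T)
  case Leaf then show ?case by simp
next
  case (Node l a r)
  show ?case
  proof (cases l r rule: node_cases)
    case 1 then show ?thesis by (simp add: bad_Node good1_def)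
  next
    case 2 then show ?thesis using Node.IH by (simp add: fp_L sublist_Cons_right bad_Node good1_def)
  next
    case 3 then show ?thesis using Node.IH by (simp add: fp_R sublist_Cons_right bad_Node good1_def)
  next
    case 4
    have "sublist [U,U] (fpath (Node l a r)) \<or> sublist [U,FR] (fpath (Node l a r)) \<longleftrightarrow>
       (prefix [U] (fpath r) \<or> prefix [FR] (fpath r)) \<or> (sublist [U,U] (fpath r) \<or> sublist [U,FR] (fpath r))
        \<or> (sublist [U,U] (fpath l) \<or> sublist [U,FR] (fpath l))"
      using 4 by (auto simp: fp_LR sub_U_both sub_noD prefix_noD)
    also have "prefix [U] (fpath r) \<or> prefix [FR] (fpath r) \<longleftrightarrow> good1 (Node l a r)"
      using 4 by (auto simp: prefix1_fpath good1_def)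
    finally show ?thesis using Node.IH by (auto simp: bad_Node)
  qed
qed

lemma path2: "(sublist [D,U] (fpath T) \<or> sublist [D,FL] (fpath T)) \<longleftrightarrow> bad good2 T"
proof (induction T)
  case Leaf then show ?case by simp
next
  case (Node l a r)
  show ?case
  proof (cases l r rule: node_cases)
    case 1 then show ?thesis by (simp add: bad_Node good2_def)
  next
    case 2 then show ?thesis using Node.IH by (simp add: fp_L sublist_Cons_right bad_Node good2_def)
  next
    case 3 then show ?thesis using Node.IH by (simp add: fp_R sublist_Cons_right bad_Node good2_def)
  next
    case 4
    have "sublist [D,U] (fpath (Node l a r)) \<or> sublist [D,FL] (fpath (Node l a r)) \<longleftrightarrow>
       (prefix [U] (fpath l) \<or> prefix [FL] (fpath l)) \<or> (sublist [D,U] (fpath r) \<or> sublist [D,FL] (fpath r))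
        \<or> (sublist [D,U] (fpath l) \<or> sublist [D,FL] (fpath l))"
      using 4 by (auto simp: fp_LR sub_U_both sub_D2)
    also have "prefix [U] (fpath l) \<or> prefix [FL] (fpath l) \<longleftrightarrow> good2 (Node l a r)"
      using 4 by (auto simp: prefix1_fpath good2_def)
    finally show ?thesis using Node.IH by (auto simp: bad_Node)
  qed
qed

lemma path3: "(sublist [U,U] (fpath T) \<or> sublist [FR,U] (fpath T)) \<longleftrightarrow> bad good3 T"
proof (induction T)
  case Leaf then show ?case by simp
next
  case (Node l a r)
  show ?case
  proof (cases l r rule: node_cases)
    case 1 then show ?thesis by (simp add: bad_Node good3_def)
  next
    case 2 then show ?thesis using Node.IH by (simp add: fp_L sublist_Cons_right bad_Node good3_def)
  next
    case 3
    have "sublist [U,U] (fpath (Node l a r)) \<or> sublist [FR,U] (fpath (Node l a r)) \<longleftrightarrow>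
       prefix [U] (fpath r) \<or> (sublist [U,U] (fpath r) \<or> sublist [FR,U] (fpath r))"
      using 3 by (auto simp: fp_R sublist_Cons_right)
    also have "prefix [U] (fpath r) \<longleftrightarrow> good3 (Node l a r)"
      using 3 by (auto simp: prefix1_fpath good3_def)
    finally show ?thesis using Node.IH 3 by (auto simp: bad_Node)
  next
    case 4
    have "sublist [U,U] (fpath (Node l a r)) \<or> sublist [FR,U] (fpath (Node l a r)) \<longleftrightarrow>
       prefix [U] (fpath r) \<or> (sublist [U,U] (fpath r) \<or> sublist [FR,U] (fpath r))
        \<or> (sublist [U,U] (fpath l) \<or> sublist [FR,U] (fpath l))"
      using 4 by (auto simp: fp_LR sub_U_both sub_noD prefix_noD)
    also have "prefix [U] (fpath r) \<longleftrightarrow> good3 (Node l a r)"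
      using 4 by (auto simp: prefix1_fpath good3_def)
    finally show ?thesis using Node.IH by (auto simp: bad_Node)
  qed
qed

definition Q4 :: "step list \<Rightarrow> bool" where
  "Q4 w = (\<exists>x\<in>{U,FR}. \<exists>y\<in>{U,FR}. \<exists>z\<in>{U,FL}. sublist [x,y,z] w)"

definition R4 :: "step list \<Rightarrow> bool" where
  "R4 w = (\<exists>y\<in>{U,FR}. \<exists>z\<in>{U,FL}. prefix [y,z] w)"

lemma R4_fpath: "R4 (fpath r) \<longleftrightarrow> (\<exists>rl c rl2 d rr2. r = Node rl c (Node rl2 d rr2) \<and> rl2 \<noteq> Leaf)"
proof (cases r)
  case Leaf then show ?thesis by (simp add: R4_def)
next
  case (Node l a r')
  show ?thesis
  proof (cases l r' rule: node_cases)
    case 1 then show ?thesis using Node by (simp add: R4_def)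
  next
    case 2 then show ?thesis using Node by (simp add: R4_def fp_L)
  next
    case 3 then show ?thesis using Node by (auto simp add: R4_def fp_R prefix1_fpath)
  next
    case 4 then show ?thesis using Node by (auto simp add: R4_def fp_LR prefix_noD prefix1_fpath)
  qed
qed

lemma Q4_Cons: "x \<in> {U,FR} \<Longrightarrow> Q4 (x # w) \<longleftrightarrow> R4 w \<or> Q4 w"
  by (auto simp: Q4_def R4_def sublist_Cons_right)

lemma Q4_FL: "Q4 (FL # w) \<longleftrightarrow> Q4 w"
  by (auto simp: Q4_def sublist_Cons_right)

lemma Q4_D: "Q4 (u @ D # v) \<longleftrightarrow> Q4 u \<or> Q4 v"
  unfolding Q4_def by (auto simp: sub_noD)

lemma R4_D: "R4 (u @ D # v) \<longleftrightarrow> R4 u"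
  unfolding R4_def by (auto simp: prefix_noD)

lemma path4: "Q4 (fpath T) \<longleftrightarrow> bad good4 T"
proof (induction T)
  case Leaf then show ?case by (simp add: Q4_def)
next
  case (Node l a r)
  show ?case
  proof (cases l r rule: node_cases)
    case 1 then show ?thesis by (simp add: bad_Node good4_def Q4_def)
  next
    case 2 then show ?thesis using Node.IH by (simp add: fp_L Q4_FL bad_Node good4_def)
  next
    case 3
    have "Q4 (fpath (Node l a r)) \<longleftrightarrow> R4 (fpath r) \<or> Q4 (fpath r)"
      using 3 by (simp add: fp_R Q4_Cons)
    also have "R4 (fpath r) \<longleftrightarrow> good4 (Node l a r)"
      by (auto simp: R4_fpath good4_def)
    finally show ?thesis using Node.IH 3 by (auto simp: bad_Node)
  next
    case 4
    have "Q4 (fpath (Node l a r)) \<longleftrightarrow> R4 (fpath r) \<or> Q4 (fpath r) \<or> Q4 (fpath l)"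
      using 4 by (simp add: fp_LR Q4_Cons Q4_D R4_D)
    also have "R4 (fpath r) \<longleftrightarrow> good4 (Node l a r)"
      by (auto simp: R4_fpath good4_def)
    finally show ?thesis using Node.IH by (auto simp: bad_Node)
  qed
qed


lemma subtrees_trans: "S \<in> subtrees T \<Longrightarrow> S' \<in> subtrees S \<Longrightarrow> S' \<in> subtrees T"
  by (induction T) auto

lemma set_subtree: "S \<in> subtrees T \<Longrightarrow> set_tree S \<subseteq> set_tree T"
  by (induction T) auto

lemma self_subtree[simp]: "T \<in> subtrees T"
  by (cases T) auto

lemma bst_subtree: "bst T \<Longrightarrow> S \<in> subtrees T \<Longrightarrow> bst S"
  by (induction T) auto

lemma subtree_unique: "bst (T :: nat tree) \<Longrightarrow> Node l a r \<in> subtrees T \<Longrightarrow> Node l' a r' \<in> subtrees T \<Longrightarrow> l = l' \<and> r = r'"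
proof (induction T)
  case Leaf then show ?case by simp
next
  case (Node L x R)
  have aL: "Node l2 a r2 \<in> subtrees L \<Longrightarrow> a \<in> set_tree L" for l2 r2 by (rule in_set_tree_if)
  have aR: "Node l2 a r2 \<in> subtrees R \<Longrightarrow> a \<in> set_tree R" for l2 r2 by (rule in_set_tree_if)
  have o: "\<forall>y\<in>set_tree L. y < x" "\<forall>y\<in>set_tree R. x < y" using Node.prems(1) by auto
  have bL: "bst L" and bR: "bst R" using Node.prems(1) by auto
  have m1: "Node l a r = Node L x R \<or> Node l a r \<in> subtrees L \<or> Node l a r \<in> subtrees R"
    using Node.prems(2) by simp
  have m2: "Node l' a r' = Node L x R \<or> Node l' a r' \<in> subtrees L \<or> Node l' a r' \<in> subtrees R"
    using Node.prems(3) by simp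
  from m1 show ?case
  proof (elim disjE)
    assume h1: "Node l a r = Node L x R"
    from m2 show ?case
    proof (elim disjE)
      assume "Node l' a r' = Node L x R" then show ?case using h1 by simp
    next
      assume "Node l' a r' \<in> subtrees L" then show ?case using h1 aL o by fastforce
    next
      assume "Node l' a r' \<in> subtrees R" then show ?case using h1 aR o by fastforce
    qed
  next
    assume h1: "Node l a r \<in> subtrees L"
    from m2 show ?case
    proof (elim disjE)
      assume "Node l' a r' = Node L x R" then show ?case using h1 aL o by fastforce
    next
      assume "Node l' a r' \<in> subtrees L" then show ?case using h1 Node.IH(1) bL by blast
    next
      assume "Node l' a r' \<in> subtrees R" then show ?case using h1 aL aR o by fastforce
    qed
  next
    assume h1: "Node l a r \<in> subtrees R"
    from m2 show ?case
    proof (elim disjE)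
      assume "Node l' a r' = Node L x R" then show ?case using h1 aR o by fastforce
    next
      assume "Node l' a r' \<in> subtrees L" then show ?case using h1 aL aR o by fastforce
    next
      assume "Node l' a r' \<in> subtrees R" then show ?case using h1 Node.IH(2) bR by blast
    qed
  qed
qed

lemma lchild_lsub: "is_lchild T a b \<Longrightarrow> in_lsub T a b"
  unfolding is_lchild_def in_lsub_def by force
lemma rchild_rsub: "is_rchild T a b \<Longrightarrow> in_rsub T a b"
  unfolding is_rchild_def in_rsub_def by force

lemma bsts_bst: "T \<in> bsts n \<Longrightarrow> bst T"
  unfolding bsts_def bst_iff_sorted_wrt_less by (simp del: upt_Suc)


lemma lsub_E: "in_lsub T a b \<Longrightarrow> \<exists>l r. Node l a r \<in> subtrees T \<and> l \<noteq> Leaf \<and> b \<in> set_tree l"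
  unfolding in_lsub_def by force
lemma rsub_E: "in_rsub T a b \<Longrightarrow> \<exists>l r. Node l a r \<in> subtrees T \<and> r \<noteq> Leaf \<and> b \<in> set_tree r"
  unfolding in_rsub_def by force
lemma lrel_E: "(if x then is_lchild T a b else in_lsub T a b) \<Longrightarrow> \<exists>l r. Node l a r \<in> subtrees T \<and> l \<noteq> Leaf \<and> b \<in> set_tree l"
  using lsub_E lchild_lsub by (cases x) auto
lemma rrel_E: "(if x then is_rchild T a b else in_rsub T a b) \<Longrightarrow> \<exists>l r. Node l a r \<in> subtrees T \<and> r \<noteq> Leaf \<and> b \<in> set_tree r"
  using rsub_E rchild_rsub by (cases x) auto
lemma lrel_I: "is_lchild T a b \<Longrightarrow> (if x then is_lchild T a b else in_lsub T a b)"
  using lchild_lsub by auto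
lemma rrel_I: "is_rchild T a b \<Longrightarrow> (if x then is_rchild T a b else in_rsub T a b)"
  using rchild_rsub by auto

lemma is_lchild_I: "Node (Node l' b r') a r \<in> subtrees T \<Longrightarrow> is_lchild T a b"
  unfolding is_lchild_def by blast
lemma is_rchild_I: "Node l a (Node l' b r') \<in> subtrees T \<Longrightarrow> is_rchild T a b"
  unfolding is_rchild_def by blast

lemma sub_L: "Node l a r \<in> subtrees T \<Longrightarrow> l \<in> subtrees T"
  using subtrees_trans[of "Node l a r" T l] by simp
lemma sub_R: "Node l a r \<in> subtrees T \<Longrightarrow> r \<in> subtrees T"
  using subtrees_trans[of "Node l a r" T r] by simp

lemma P1: "pat_tree [2,1,3,4] = Node (Node Leaf 1 Leaf) 2 (Node Leaf 3 (Node Leaf 4 Leaf))"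
  by (simp add: pat_tree_def)

lemma containsD: "contains T P e \<Longrightarrow> \<exists>f. \<forall>l a r. Node l a r \<in> subtrees P \<longrightarrow>
        (\<forall>l' b r'. l = Node l' b r' \<longrightarrow>
            (if e b then is_lchild T (f a) (f b) else in_lsub T (f a) (f b))) \<and>
        (\<forall>l' b r'. r = Node l' b r' \<longrightarrow>
            (if e b then is_rchild T (f a) (f b) else in_rsub T (f a) (f b)))"
  unfolding contains_def by (elim exE conjE) (rule exI, assumption)

lemma c1_dest:
  assumes bst: "bst T" and c: "contains T (pat_tree [2,1,3,4]) (pat_e [2,1,3,4] [x2,True,x4])"
  shows "bad good1 T"
proof -
  obtain f where H: "\<forall>l a r. Node l a r \<in> subtrees (pat_tree [2,1,3,4]) \<longrightarrow>
        (\<forall>l' b r'. l = Node l' b r' \<longrightarrow>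
            (if pat_e [2,1,3,4] [x2,True,x4] b then is_lchild T (f a) (f b) else in_lsub T (f a) (f b))) \<and>
        (\<forall>l' b r'. r = Node l' b r' \<longrightarrow>
            (if pat_e [2,1,3,4] [x2,True,x4] b then is_rchild T (f a) (f b) else in_rsub T (f a) (f b)))"
    using containsD[OF c] by blast
  have "Node (Node Leaf 1 Leaf) 2 (Node Leaf 3 (Node Leaf 4 Leaf)) \<in> subtrees (pat_tree [2,1,3,4])"
    unfolding P1 by simp
  from H[rule_format, OF this]
  have r1: "(if x2 then is_lchild T (f 2) (f 1) else in_lsub T (f 2) (f 1))" and r2: "is_rchild T (f 2) (f 3)"
    by (simp_all add: pat_e_def)
  have "Node Leaf 3 (Node Leaf 4 Leaf) \<in> subtrees (pat_tree [2,1,3,4])"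
    unfolding P1 by simp
  from H[rule_format, OF this]
  have r3: "(if x4 then is_rchild T (f 3) (f 4) else in_rsub T (f 3) (f 4))"
    by (simp add: pat_e_def)
  obtain l r where A: "Node l (f 2) r \<in> subtrees T" "l \<noteq> Leaf" using lrel_E[OF r1] by blast
  obtain l0 l1 r1 where B: "Node l0 (f 2) (Node l1 (f 3) r1) \<in> subtrees T" using r2 unfolding is_rchild_def by blast
  obtain l3 r3 where C: "Node l3 (f 3) r3 \<in> subtrees T" "r3 \<noteq> Leaf" using rrel_E[OF r3] by blast
  have "l = l0" using subtree_unique[OF bst A(1) B] by simp
  have "Node l1 (f 3) r1 \<in> subtrees T" using sub_R[OF B] .
  then have "r1 = r3" using subtree_unique[OF bst _ C(1)] by blast
  have "good1 (Node l0 (f 2) (Node l1 (f 3) r1))"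
    unfolding good1_def using A(2) C(2) \<open>l = l0\<close> \<open>r1 = r3\<close> by blast
  then show ?thesis using B unfolding bad_def by blast
qed

lemma bst_Node: "bst (Node l a r) \<Longrightarrow> (\<forall>x\<in>set_tree l. x < a) \<and> (\<forall>x\<in>set_tree r. a < x) \<and> bst l \<and> bst r"
  by simp

lemma c1_intro:
  assumes bst: "bst T" and b: "bad good1 T"
  shows "contains T (pat_tree [2,1,3,4]) (pat_e [2,1,3,4] [x2,True,x4])"
proof -
  obtain l a rl c rr where S: "Node l a (Node rl c rr) \<in> subtrees T" "l \<noteq> Leaf" "rr \<noteq> Leaf"
    using b unfolding bad_def good1_def by blast
  obtain ll b lr where l: "l = Node ll b lr" using S(2) by (cases l) auto
  obtain rrl d rrr where rr: "rr = Node rrl d rrr" using S(3) by (cases rr) auto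
  have bS: "bst (Node l a (Node rl c rr))" using bst_subtree[OF bst S(1)] .
  have ord: "b < a" "a < c" "c < d" using bS l rr by auto
  have sub2: "Node rl c (Node rrl d rrr) \<in> subtrees T" using sub_R[OF S(1)] rr by simp
  have rel: "is_lchild T a b" "is_rchild T a c" "is_rchild T c d"
    using S(1) l sub2 by (auto intro: is_lchild_I is_rchild_I)
  have inT: "a \<in> set_tree T" "b \<in> set_tree T" "c \<in> set_tree T" "d \<in> set_tree T"
    using set_subtree[OF S(1)] l rr by auto
  show ?thesis
    unfolding contains_def P1
    apply (rule exI[of _ "\<lambda>i. if i = 1 then b else if i = 2 then a else if i = 3 then c else d"])
    apply (intro conjI)
    subgoal using ord by (auto simp: inj_on_def)
    subgoal using inT by auto
    subgoal using rel lrel_I[OF rel(1), of x2] rrel_I[OF rel(3), of x4] by (simp add: pat_e_def)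
    done
qed


lemma P2: "pat_tree [3,2,1,4] = Node (Node (Node Leaf 1 Leaf) 2 Leaf) 3 (Node Leaf 4 Leaf)"
  by (simp add: pat_tree_def)
lemma P3: "pat_tree [1,3,2,4] = Node Leaf 1 (Node (Node Leaf 2 Leaf) 3 (Node Leaf 4 Leaf))"
  by (simp add: pat_tree_def)
lemma P4: "pat_tree [1,2,4,3] = Node Leaf 1 (Node Leaf 2 (Node (Node Leaf 3 Leaf) 4 Leaf))"
  by (simp add: pat_tree_def)

lemma c2_dest:
  assumes bst: "bst T" and c: "contains T (pat_tree [3,2,1,4]) (pat_e [3,2,1,4] [True,x3,x4])"
  shows "bad good2 T"
proof -
  obtain f where H: "\<forall>l a r. Node l a r \<in> subtrees (pat_tree [3,2,1,4]) \<longrightarrow>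
        (\<forall>l' b r'. l = Node l' b r' \<longrightarrow>
            (if pat_e [3,2,1,4] [True,x3,x4] b then is_lchild T (f a) (f b) else in_lsub T (f a) (f b))) \<and>
        (\<forall>l' b r'. r = Node l' b r' \<longrightarrow>
            (if pat_e [3,2,1,4] [True,x3,x4] b then is_rchild T (f a) (f b) else in_rsub T (f a) (f b)))"
    using containsD[OF c] by blast
  have "Node (Node (Node Leaf 1 Leaf) 2 Leaf) 3 (Node Leaf 4 Leaf) \<in> subtrees (pat_tree [3,2,1,4])"
    unfolding P2 by simp
  from H[rule_format, OF this]
  have r1: "is_lchild T (f 3) (f 2)" and r2: "(if x4 then is_rchild T (f 3) (f 4) else in_rsub T (f 3) (f 4))"
    by (simp_all add: pat_e_def)
  have "Node (Node Leaf 1 Leaf) 2 Leaf \<in> subtrees (pat_tree [3,2,1,4])"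
    unfolding P2 by simp
  from H[rule_format, OF this]
  have r3: "(if x3 then is_lchild T (f 2) (f 1) else in_lsub T (f 2) (f 1))"
    by (simp add: pat_e_def)
  obtain l1 r1 r0 where B: "Node (Node l1 (f 2) r1) (f 3) r0 \<in> subtrees T" using r1 unfolding is_lchild_def by blast
  obtain l r where A: "Node l (f 3) r \<in> subtrees T" "r \<noteq> Leaf" using rrel_E[OF r2] by blast
  obtain l3 r3 where C: "Node l3 (f 2) r3 \<in> subtrees T" "l3 \<noteq> Leaf" using lrel_E[OF r3] by blast
  have "r = r0" using subtree_unique[OF bst A(1) B] by simp
  have "Node l1 (f 2) r1 \<in> subtrees T" using sub_L[OF B] .
  then have "l1 = l3" using subtree_unique[OF bst _ C(1)] by blast
  have "good2 (Node (Node l1 (f 2) r1) (f 3) r0)"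
    unfolding good2_def using A(2) C(2) \<open>r = r0\<close> \<open>l1 = l3\<close> by blast
  then show ?thesis using B unfolding bad_def by blast
qed

lemma c2_intro:
  assumes bst: "bst T" and b: "bad good2 T"
  shows "contains T (pat_tree [3,2,1,4]) (pat_e [3,2,1,4] [True,x3,x4])"
proof -
  obtain ll b lr a r where S: "Node (Node ll b lr) a r \<in> subtrees T" "ll \<noteq> Leaf" "r \<noteq> Leaf"
    using b unfolding bad_def good2_def by blast
  obtain lll c llr where ll: "ll = Node lll c llr" using S(2) by (cases ll) auto
  obtain rl d rr where r: "r = Node rl d rr" using S(3) by (cases r) auto
  have bS: "bst (Node (Node ll b lr) a r)" using bst_subtree[OF bst S(1)] .
  have ord: "c < b" "b < a" "a < d" using bS ll r by auto
  have sub2: "Node (Node lll c llr) b lr \<in> subtrees T" using sub_L[OF S(1)] ll by simp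
  have rel: "is_lchild T a b" "is_rchild T a d" "is_lchild T b c"
    using S(1) r sub2 by (auto intro: is_lchild_I is_rchild_I)
  have inT: "a \<in> set_tree T" "b \<in> set_tree T" "c \<in> set_tree T" "d \<in> set_tree T"
    using set_subtree[OF S(1)] ll r by auto
  show ?thesis
    unfolding contains_def P2
    apply (rule exI[of _ "\<lambda>i. if i = 1 then c else if i = 2 then b else if i = 3 then a else d"])
    apply (intro conjI)
    subgoal using ord by (auto simp: inj_on_def)
    subgoal using inT by auto
    subgoal using rel lrel_I[OF rel(3), of x3] rrel_I[OF rel(2), of x4] by (simp add: pat_e_def)
    done
qed

lemma c3_dest:
  assumes bst: "bst T" and c: "contains T (pat_tree [1,3,2,4]) (pat_e [1,3,2,4] [True,x3,x4])"
  shows "bad good3 T"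
proof -
  obtain f where H: "\<forall>l a r. Node l a r \<in> subtrees (pat_tree [1,3,2,4]) \<longrightarrow>
        (\<forall>l' b r'. l = Node l' b r' \<longrightarrow>
            (if pat_e [1,3,2,4] [True,x3,x4] b then is_lchild T (f a) (f b) else in_lsub T (f a) (f b))) \<and>
        (\<forall>l' b r'. r = Node l' b r' \<longrightarrow>
            (if pat_e [1,3,2,4] [True,x3,x4] b then is_rchild T (f a) (f b) else in_rsub T (f a) (f b)))"
    using containsD[OF c] by blast
  have "Node Leaf 1 (Node (Node Leaf 2 Leaf) 3 (Node Leaf 4 Leaf)) \<in> subtrees (pat_tree [1,3,2,4])"
    unfolding P3 by simp
  from H[rule_format, OF this]
  have r1: "is_rchild T (f 1) (f 3)"
    by (simp_all add: pat_e_def)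
  have "Node (Node Leaf 2 Leaf) 3 (Node Leaf 4 Leaf) \<in> subtrees (pat_tree [1,3,2,4])"
    unfolding P3 by simp
  from H[rule_format, OF this]
  have r2: "(if x3 then is_lchild T (f 3) (f 2) else in_lsub T (f 3) (f 2))"
   and r3: "(if x4 then is_rchild T (f 3) (f 4) else in_rsub T (f 3) (f 4))"
    by (simp_all add: pat_e_def)
  obtain l0 l1 r1 where B: "Node l0 (f 1) (Node l1 (f 3) r1) \<in> subtrees T" using r1 unfolding is_rchild_def by blast
  obtain l2 r2 where A: "Node l2 (f 3) r2 \<in> subtrees T" "l2 \<noteq> Leaf" using lrel_E[OF r2] by blast
  obtain l3 r3 where C: "Node l3 (f 3) r3 \<in> subtrees T" "r3 \<noteq> Leaf" using rrel_E[OF r3] by blast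
  have "Node l1 (f 3) r1 \<in> subtrees T" using sub_R[OF B] .
  then have "l1 = l2" "r1 = r3" using subtree_unique[OF bst _ A(1)] subtree_unique[OF bst _ C(1)] by blast+
  have "good3 (Node l0 (f 1) (Node l1 (f 3) r1))"
    unfolding good3_def using A(2) C(2) \<open>l1 = l2\<close> \<open>r1 = r3\<close> by blast
  then show ?thesis using B unfolding bad_def by blast
qed

lemma c3_intro:
  assumes bst: "bst T" and b: "bad good3 T"
  shows "contains T (pat_tree [1,3,2,4]) (pat_e [1,3,2,4] [True,x3,x4])"
proof -
  obtain l a rl c rr where S: "Node l a (Node rl c rr) \<in> subtrees T" "rl \<noteq> Leaf" "rr \<noteq> Leaf"
    using b unfolding bad_def good3_def by blast
  obtain rll b rlr where rl: "rl = Node rll b rlr" using S(2) by (cases rl) auto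
  obtain rrl d rrr where rr: "rr = Node rrl d rrr" using S(3) by (cases rr) auto
  have bS: "bst (Node l a (Node rl c rr))" using bst_subtree[OF bst S(1)] .
  have ord: "a < b" "b < c" "c < d" using bS rl rr by auto
  have sub2: "Node (Node rll b rlr) c (Node rrl d rrr) \<in> subtrees T" using sub_R[OF S(1)] rl rr by simp
  have rel: "is_rchild T a c" "is_lchild T c b" "is_rchild T c d"
    using S(1) sub2 by (auto intro: is_lchild_I is_rchild_I)
  have inT: "a \<in> set_tree T" "b \<in> set_tree T" "c \<in> set_tree T" "d \<in> set_tree T"
    using set_subtree[OF S(1)] rl rr by auto
  show ?thesis
    unfolding contains_def P3
    apply (rule exI[of _ "\<lambda>i. if i = 1 then a else if i = 2 then b else if i = 3 then c else d"])
    apply (intro conjI)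
    subgoal using ord by (auto simp: inj_on_def)
    subgoal using inT by auto
    subgoal using rel lrel_I[OF rel(2), of x3] rrel_I[OF rel(3), of x4] by (simp add: pat_e_def)
    done
qed

lemma chain4: "Node l0 a (Node l1 b R) \<in> subtrees T \<Longrightarrow> Node l' x r' \<in> subtrees R \<Longrightarrow> l' \<noteq> Leaf \<Longrightarrow> bad good4 T"
proof (induction R arbitrary: l0 a l1 b)
  case Leaf then show ?case by simp
next
  case (Node Rl c Rr)
  show ?case
  proof (cases "Rl = Leaf")
    case False
    then have "good4 (Node l0 a (Node l1 b (Node Rl c Rr)))" unfolding good4_def by blast
    then show ?thesis using Node.prems(1) unfolding bad_def by blast
  next
    case True
    then have "Node l' x r' \<in> subtrees Rr" using Node.prems(2,3) by auto
    moreover have "Node l1 b (Node Leaf c Rr) \<in> subtrees T" using sub_R[OF Node.prems(1)] True by simp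
    ultimately show ?thesis using Node.IH(2) Node.prems(3) by blast
  qed
qed

lemma c4_dest:
  assumes bst: "bst T" and c: "contains T (pat_tree [1,2,4,3]) (pat_e [1,2,4,3] [True,x3,x4])"
  shows "bad good4 T"
proof -
  obtain f where H: "\<forall>l a r. Node l a r \<in> subtrees (pat_tree [1,2,4,3]) \<longrightarrow>
        (\<forall>l' b r'. l = Node l' b r' \<longrightarrow>
            (if pat_e [1,2,4,3] [True,x3,x4] b then is_lchild T (f a) (f b) else in_lsub T (f a) (f b))) \<and>
        (\<forall>l' b r'. r = Node l' b r' \<longrightarrow>
            (if pat_e [1,2,4,3] [True,x3,x4] b then is_rchild T (f a) (f b) else in_rsub T (f a) (f b)))"
    using containsD[OF c] by blast
  have "Node Leaf 1 (Node Leaf 2 (Node (Node Leaf 3 Leaf) 4 Leaf)) \<in> subtrees (pat_tree [1,2,4,3])"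
    unfolding P4 by simp
  from H[rule_format, OF this]
  have r1: "is_rchild T (f 1) (f 2)"
    by (simp_all add: pat_e_def)
  have "Node Leaf 2 (Node (Node Leaf 3 Leaf) 4 Leaf) \<in> subtrees (pat_tree [1,2,4,3])"
    unfolding P4 by simp
  from H[rule_format, OF this]
  have r2: "(if x3 then is_rchild T (f 2) (f 4) else in_rsub T (f 2) (f 4))"
    by (simp_all add: pat_e_def)
  have "Node (Node Leaf 3 Leaf) 4 Leaf \<in> subtrees (pat_tree [1,2,4,3])"
    unfolding P4 by simp
  from H[rule_format, OF this]
  have r3: "(if x4 then is_lchild T (f 4) (f 3) else in_lsub T (f 4) (f 3))"
    by (simp_all add: pat_e_def)
  obtain l0 l1 r1 where B: "Node l0 (f 1) (Node l1 (f 2) r1) \<in> subtrees T" using r1 unfolding is_rchild_def by blast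
  obtain l2 r2 where A: "Node l2 (f 2) r2 \<in> subtrees T" "f 4 \<in> set_tree r2" using rrel_E[OF r2] by blast
  obtain l3 r3 where C: "Node l3 (f 4) r3 \<in> subtrees T" "l3 \<noteq> Leaf" using lrel_E[OF r3] by blast
  have "Node l1 (f 2) r1 \<in> subtrees T" using sub_R[OF B] .
  then have "r1 = r2" using subtree_unique[OF bst _ A(1)] by blast
  then have "\<exists>l' r'. Node l' (f 4) r' \<in> subtrees r1" using set_treeE[of "f 4" r2] A(2) by simp
  then obtain l' r' where D: "Node l' (f 4) r' \<in> subtrees r1" by blast
  have "r1 \<in> subtrees T" using sub_R[OF \<open>Node l1 (f 2) r1 \<in> subtrees T\<close>] .
  then have "Node l' (f 4) r' \<in> subtrees T" using D subtrees_trans by blast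
  then have "l' = l3" using subtree_unique[OF bst _ C(1)] by blast
  then show ?thesis using chain4[OF B D] C(2) by blast
qed

lemma c4_intro:
  assumes bst: "bst T" and b: "bad good4 T"
  shows "contains T (pat_tree [1,2,4,3]) (pat_e [1,2,4,3] [True,x3,x4])"
proof -
  obtain l a l2 b l3 c r3 where S: "Node l a (Node l2 b (Node l3 c r3)) \<in> subtrees T" "l3 \<noteq> Leaf"
    using b unfolding bad_def good4_def by blast
  obtain l3l d l3r where l3: "l3 = Node l3l d l3r" using S(2) by (cases l3) auto
  have bS: "bst (Node l a (Node l2 b (Node l3 c r3)))" using bst_subtree[OF bst S(1)] .
  have ord: "a < b" "b < d" "d < c" using bS l3 by auto
  have sub2: "Node l2 b (Node (Node l3l d l3r) c r3) \<in> subtrees T" using sub_R[OF S(1)] l3 by simp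
  have sub3: "Node (Node l3l d l3r) c r3 \<in> subtrees T" using sub_R[OF sub2] .
  have rel: "is_rchild T a b" "is_rchild T b c" "is_lchild T c d"
    using S(1) sub2 sub3 by (auto intro: is_lchild_I is_rchild_I)
  have inT: "a \<in> set_tree T" "b \<in> set_tree T" "c \<in> set_tree T" "d \<in> set_tree T"
    using set_subtree[OF S(1)] l3 by auto
  show ?thesis
    unfolding contains_def P4
    apply (rule exI[of _ "\<lambda>i. if i = 1 then a else if i = 2 then b else if i = 3 then d else c"])
    apply (intro conjI)
    subgoal using ord by (auto simp: inj_on_def)
    subgoal using inT by auto
    subgoal using rel rrel_I[OF rel(2), of x3] lrel_I[OF rel(3), of x4] by (simp add: pat_e_def)
    done
qed


definition g25 :: "nat \<Rightarrow> nat" where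
  "g25 n = (if n = 0 then 1 else a25242_aux (n - 1))"

lemma conv_split:
  fixes f :: "nat \<Rightarrow> nat"
  shows "(\<Sum>a\<le>Suc (Suc m). f a * f (Suc (Suc m) - a)) =
     f 0 * f (Suc (Suc m)) + f (Suc (Suc m)) * f 0 + (\<Sum>i\<le>m. f (Suc i) * f (Suc m - i))"
proof -
  have "(\<Sum>a\<le>Suc (Suc m). f a * f (Suc (Suc m) - a)) = f 0 * f (Suc (Suc m)) + (\<Sum>i\<le>Suc m. f (Suc i) * f (Suc (Suc m) - Suc i))"
    by (subst sum.atMost_Suc_shift) simp
  also have "(\<Sum>i\<le>Suc m. f (Suc i) * f (Suc (Suc m) - Suc i)) = (\<Sum>i\<le>m. f (Suc i) * f (Suc m - i)) + f (Suc (Suc m)) * f 0"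
    by (simp add: Suc_diff_le)
  finally show ?thesis by linarith
qed

lemma numeric:
  fixes v k :: "nat \<Rightarrow> nat"
  assumes v0: "v 0 = 1" and vS: "\<And>n. v (Suc n) = v n + k (Suc n)" and k1: "k (Suc 0) = 0"
    and kS: "\<And>n. k (Suc (Suc n)) = k (Suc n) + (\<Sum>a\<le>n. v a * v (n - a))"
  shows "v n = g25 n"
proof (induction n rule: less_induct)
  case (less n)
  consider "n = 0" | "n = 1" | "n = 2" | "n = 3" | m where "n = Suc (Suc (Suc (Suc m)))"
    by (metis One_nat_def Suc_1 eval_nat_numeral(3) not0_implies_Suc)
  then show ?case
  proof cases
    case 1 then show ?thesis using v0 by (simp add: g25_def)
  next
    case 2 then show ?thesis using v0 vS[of 0] k1 by (simp add: g25_def)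
  next
    case 3 then show ?thesis using v0 vS[of 0] vS[of 1] k1 kS[of 0] by (simp add: g25_def numeral_2_eq_2)
  next
    case 4
    have "v 3 = 5" using v0 vS[of 0] vS[of 1] vS[of 2] k1 kS[of 0] kS[of 1]
      by (simp add: numeral_2_eq_2 numeral_3_eq_3)
    then show ?thesis using 4 by (simp add: g25_def numeral_2_eq_2 numeral_3_eq_3)
  next
    case 5
    let ?S = "\<Sum>i\<le>m. v (Suc i) * v (Suc m - i)"
    have e1: "v (Suc (Suc (Suc (Suc m)))) = v (Suc (Suc (Suc m))) + k (Suc (Suc (Suc (Suc m))))" by (rule vS)
    have e2: "k (Suc (Suc (Suc (Suc m)))) = k (Suc (Suc (Suc m))) + (\<Sum>a\<le>Suc (Suc m). v a * v (Suc (Suc m) - a))" by (rule kS)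
    have e3: "v (Suc (Suc (Suc m))) = v (Suc (Suc m)) + k (Suc (Suc (Suc m)))" by (rule vS)
    have e4: "(\<Sum>a\<le>Suc (Suc m). v a * v (Suc (Suc m) - a)) = 2 * v (Suc (Suc m)) + ?S"
      using conv_split[of v m] v0 by simp
    have main: "v (Suc (Suc (Suc (Suc m)))) = 2 * v (Suc (Suc (Suc m))) + v (Suc (Suc m)) + ?S"
      using e1 e2 e3 e4 by linarith
    have "?S = (\<Sum>i\<le>m. a25242_aux i * a25242_aux (m - i))"
    proof (rule sum.cong)
      fix i assume "i \<in> {..m}"
      then have "v (Suc i) = a25242_aux i" "v (Suc m - i) = a25242_aux (m - i)"
        using less.IH[of "Suc i"] less.IH[of "Suc m - i"] 5 by (auto simp: g25_def Suc_diff_le)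
      then show "v (Suc i) * v (Suc m - i) = a25242_aux i * a25242_aux (m - i)" by simp
    qed simp
    moreover have "v (Suc (Suc (Suc m))) = a25242_aux (Suc (Suc m))" "v (Suc (Suc m)) = a25242_aux (Suc m)"
      using less.IH[of "Suc (Suc (Suc m))"] less.IH[of "Suc (Suc m)"] 5 by (auto simp: g25_def)
    ultimately show ?thesis using main 5 by (simp add: g25_def)
  qed
qed

lemma finite_size: "finite {T :: unit tree. size T = n}"
proof (induction n rule: less_induct)
  case (less n)
  show ?case
  proof (cases n)
    case 0 then show ?thesis by simp
  next
    case (Suc m)
    have "{T :: unit tree. size T = n} \<subseteq> (\<lambda>(l, r). Node l () r) ` (\<Union>a\<le>m. {T. size T = a} \<times> {T. size T = m - a})"
    proof
      fix T :: "unit tree" assume "T \<in> {T. size T = n}"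
      then obtain l r where T: "T = Node l () r" "size l + size r = m" using Suc by (cases T) auto
      then show "T \<in> (\<lambda>(l, r). Node l () r) ` (\<Union>a\<le>m. {T. size T = a} \<times> {T. size T = m - a})"
        by (auto intro!: image_eqI[of _ _ "(l, r)"])
    qed
    moreover have "finite (\<Union>a\<le>m. {T :: unit tree. size T = a} \<times> {T :: unit tree. size T = m - a})"
    proof -
      have fa: "\<And>a. a \<le> m \<Longrightarrow> finite {T :: unit tree. size T = a}" using less.IH Suc by simp
      show ?thesis by (auto intro!: finite_cartesian_product fa)
    qed
    ultimately show ?thesis by (meson finite_imageI finite_subset)
  qed
qed

lemma count_generic:
  fixes valid kk :: "unit tree \<Rightarrow> bool" and ext :: "unit tree \<Rightarrow> unit tree"
  assumes hv: "\<And>T. valid T \<longleftrightarrow> T = Leaf \<or> (\<exists>X. T = Node X () Leaf \<and> valid X) \<or> kk T"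
  and hk: "\<And>T. kk T \<longleftrightarrow> (\<exists>X Y. T = Node X () (Node Y () Leaf) \<and> valid X \<and> valid Y) \<or> (\<exists>K. T = ext K \<and> kk K)"
  and hkn: "\<And>T. kk T \<Longrightarrow> \<exists>X R. T = Node X () R \<and> R \<noteq> Leaf"
  and hinj: "\<And>K K'. kk K \<Longrightarrow> kk K' \<Longrightarrow> ext K = ext K' \<Longrightarrow> K = K'"
  and hsz: "\<And>K. kk K \<Longrightarrow> size (ext K) = Suc (size K)"
  and hdis: "\<And>K X Y. kk K \<Longrightarrow> ext K \<noteq> Node X () (Node Y () Leaf)"
  shows "card {T. size T = n \<and> valid T} = g25 n"
proof -
  define V where "V n = {T. size T = n \<and> valid T}" for n
  define K where "K n = {T. size T = n \<and> kk T}" for n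
  have finV: "finite (V n)" for n
    using finite_size[of n] unfolding V_def by (rule finite_subset[rotated]) auto
  have finK: "finite (K n)" for n
    using finite_size[of n] unfolding K_def by (rule finite_subset[rotated]) auto
  have a: "card (V 0) = 1"
  proof -
    have "V 0 = {Leaf}" unfolding V_def using hv[of Leaf] by auto
    then show ?thesis by simp
  qed
  have b: "card (V (Suc n)) = card (V n) + card (K (Suc n))" for n
  proof -
    have eq: "V (Suc n) = (\<lambda>X. Node X () Leaf) ` V n \<union> K (Suc n)"
    proof
      show "V (Suc n) \<subseteq> (\<lambda>X. Node X () Leaf) ` V n \<union> K (Suc n)"
      proof
        fix T assume "T \<in> V (Suc n)"
        then have "size T = Suc n" "valid T" unfolding V_def by auto
        then show "T \<in> (\<lambda>X. Node X () Leaf) ` V n \<union> K (Suc n)"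
          using hv[of T] unfolding V_def K_def by auto
      qed
    next
      show "(\<lambda>X. Node X () Leaf) ` V n \<union> K (Suc n) \<subseteq> V (Suc n)"
      proof
        fix T assume "T \<in> (\<lambda>X. Node X () Leaf) ` V n \<union> K (Suc n)"
        then show "T \<in> V (Suc n)"
        proof
          assume "T \<in> (\<lambda>X. Node X () Leaf) ` V n"
          then obtain X where "T = Node X () Leaf" "X \<in> V n" by auto
          then show ?thesis unfolding V_def using hv[of T] by auto
        next
          assume "T \<in> K (Suc n)"
          then show ?thesis unfolding V_def K_def using hv[of T] by auto
        qed
      qed
    qed
    have dis: "(\<lambda>X. Node X () Leaf) ` V n \<inter> K (Suc n) = {}"
      unfolding K_def using hkn by fastforce
    have "card (V (Suc n)) = card ((\<lambda>X. Node X () Leaf) ` V n) + card (K (Suc n))"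
      unfolding eq using dis finV finK by (intro card_Un_disjoint) auto
    also have "card ((\<lambda>X. Node X () Leaf) ` V n) = card (V n)"
      by (rule card_image) (auto simp: inj_on_def)
    finally show ?thesis .
  qed
  have c: "card (K (Suc 0)) = 0"
  proof -
    have "K (Suc 0) = {}" unfolding K_def using hkn by fastforce
    then show ?thesis by simp
  qed
  have d: "card (K (Suc (Suc n))) = card (K (Suc n)) + (\<Sum>a\<le>n. card (V a) * card (V (n - a)))" for n
  proof -
    define B where "B = (\<Union>a\<le>n. V a \<times> V (n - a))"
    have eq: "K (Suc (Suc n)) = (\<lambda>(X, Y). Node X () (Node Y () Leaf)) ` B \<union> ext ` K (Suc n)"
    proof
      show "K (Suc (Suc n)) \<subseteq> (\<lambda>(X, Y). Node X () (Node Y () Leaf)) ` B \<union> ext ` K (Suc n)"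
      proof
        fix T assume "T \<in> K (Suc (Suc n))"
        then have T: "size T = Suc (Suc n)" "kk T" unfolding K_def by auto
        have "(\<exists>X Y. T = Node X () (Node Y () Leaf) \<and> valid X \<and> valid Y) \<or> (\<exists>K. T = ext K \<and> kk K)"
          using hk[of T] T(2) by blast
        then show "T \<in> (\<lambda>(X, Y). Node X () (Node Y () Leaf)) ` B \<union> ext ` K (Suc n)"
        proof (elim disjE exE conjE)
          fix X Y assume h: "T = Node X () (Node Y () Leaf)" "valid X" "valid Y"
          then have "(X, Y) \<in> B" unfolding B_def V_def using T(1) by auto
          then show ?thesis using h by (auto intro!: image_eqI[of _ _ "(X, Y)"])
        next
          fix K' assume h: "T = ext K'" "kk K'"
          then have "K' \<in> K (Suc n)" unfolding K_def using T(1) hsz by auto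
          then show ?thesis using h by auto
        qed
      qed
    next
      show "(\<lambda>(X, Y). Node X () (Node Y () Leaf)) ` B \<union> ext ` K (Suc n) \<subseteq> K (Suc (Suc n))"
      proof
        fix T assume "T \<in> (\<lambda>(X, Y). Node X () (Node Y () Leaf)) ` B \<union> ext ` K (Suc n)"
        then show "T \<in> K (Suc (Suc n))"
        proof
          assume "T \<in> (\<lambda>(X, Y). Node X () (Node Y () Leaf)) ` B"
          then obtain X Y where "T = Node X () (Node Y () Leaf)" "(X, Y) \<in> B" by auto
          then show ?thesis unfolding K_def B_def V_def using hk[of T] by auto
        next
          assume "T \<in> ext ` K (Suc n)"
          then obtain K' where "T = ext K'" "K' \<in> K (Suc n)" by auto
          then show ?thesis unfolding K_def using hk[of T] hsz by auto
        qed
      qed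
    qed
    have dis: "(\<lambda>(X, Y). Node X () (Node Y () Leaf)) ` B \<inter> ext ` K (Suc n) = {}"
    proof (rule ccontr)
      assume "(\<lambda>(X, Y). Node X () (Node Y () Leaf)) ` B \<inter> ext ` K (Suc n) \<noteq> {}"
      then obtain X Y K' where "Node X () (Node Y () Leaf) = ext K'" "kk K'" unfolding K_def by auto
      then show False using hdis by metis
    qed
    have finB: "finite B" unfolding B_def using finV by auto
    have "card (K (Suc (Suc n))) = card ((\<lambda>(X, Y). Node X () (Node Y () Leaf)) ` B) + card (ext ` K (Suc n))"
      unfolding eq using dis finB finK by (intro card_Un_disjoint) auto
    also have "card ((\<lambda>(X, Y). Node X () (Node Y () Leaf)) ` B) = card B"
      by (rule card_image) (auto simp: inj_on_def)
    also have "card (ext ` K (Suc n)) = card (K (Suc n))"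
      by (rule card_image) (auto simp: inj_on_def K_def intro: hinj)
    also have "card B = (\<Sum>a\<le>n. card (V a \<times> V (n - a)))"
      unfolding B_def using finV by (intro card_UN_disjoint) (auto simp: V_def)
    also have "\<dots> = (\<Sum>a\<le>n. card (V a) * card (V (n - a)))"
      by (simp add: card_cartesian_product)
    finally show ?thesis by simp
  qed
  have "card (V n) = g25 n"
    by (rule numeric[where k = "\<lambda>n. card (K n)"]) (use a b c d in auto)
  then show ?thesis unfolding V_def .
qed


lemma notbad_LeafR:
  "\<not> good1 (Node X u Leaf)" "\<not> good3 (Node X u Leaf)" "\<not> good4 (Node X u Leaf)"
  by (auto simp: good1_def good3_def good4_def)

definition ext1 :: "unit tree \<Rightarrow> unit tree" where "ext1 K = Node Leaf () K"

inductive kk1 :: "unit tree \<Rightarrow> bool" where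
  kk1_base: "\<not> bad good1 X \<Longrightarrow> \<not> bad good1 Y \<Longrightarrow> kk1 (Node X () (Node Y () Leaf))"
| kk1_ext: "kk1 K \<Longrightarrow> kk1 (ext1 K)"

lemma kk1_shape: "kk1 T \<Longrightarrow> \<exists>X R. T = Node X () R \<and> R \<noteq> Leaf"
  by (induction rule: kk1.induct) (auto simp: ext1_def)

lemma kk1_ok: "kk1 T \<Longrightarrow> \<not> bad good1 T"
proof (induction rule: kk1.induct)
  case (kk1_base X Y)
  have "\<not> good1 (Node X () (Node Y () Leaf))" "\<not> good1 (Node Y () Leaf)" by (auto simp: good1_def)
  then show ?case using kk1_base by (simp add: bad_Node)
next
  case (kk1_ext K)
  have "\<not> good1 (Node Leaf () K)" by (simp add: good1_def)
  then show ?case using kk1_ext by (simp add: bad_Node ext1_def)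
qed

lemma kk1_complete: "\<not> bad good1 (Node X () R) \<Longrightarrow> R \<noteq> Leaf \<Longrightarrow> kk1 (Node X () R)"
proof (induction R arbitrary: X)
  case Leaf then show ?case by simp
next
  case (Node Y u Z)
  show ?case
  proof (cases "Z = Leaf")
    case True
    then show ?thesis using Node.prems kk1_base[of X Y] by (auto simp: bad_Node)
  next
    case False
    have "X \<noteq> Leaf \<Longrightarrow> good1 (Node X () (Node Y u Z))" using False by (simp add: good1_def)
    then have "X = Leaf" using Node.prems(1) unfolding bad_Node by blast
    have "\<not> bad good1 (Node Y () Z)" using Node.prems(1) by (auto simp: bad_Node)
    then have "kk1 (Node Y () Z)" using Node.IH(2) False by blast
    then show ?thesis using kk1_ext \<open>X = Leaf\<close> by (auto simp: ext1_def)
  qed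
qed

lemma valid_char:
  assumes "\<And>T. kk T \<Longrightarrow> \<not> bad g T"
    and "\<And>X R. \<not> bad g (Node X () R) \<Longrightarrow> R \<noteq> Leaf \<Longrightarrow> kk (Node X () R)"
    and "\<And>X. \<not> g (Node X () Leaf)" and "\<not> g Leaf"
  shows "\<not> bad g T \<longleftrightarrow> T = Leaf \<or> (\<exists>X. T = Node X () Leaf \<and> \<not> bad g X) \<or> kk T"
proof
  assume h: "\<not> bad g T"
  show "T = Leaf \<or> (\<exists>X. T = Node X () Leaf \<and> \<not> bad g X) \<or> kk T"
  proof (cases T)
    case Leaf then show ?thesis by simp
  next
    case (Node X u R)
    then show ?thesis using h assms(2)[of X R] by (cases "R = Leaf") (auto simp: bad_Node)
  qed
next
  assume "T = Leaf \<or> (\<exists>X. T = Node X () Leaf \<and> \<not> bad g X) \<or> kk T"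
  then show "\<not> bad g T" using assms by (auto simp: bad_Node)
qed

lemma count1: "card {T :: unit tree. size T = n \<and> \<not> bad good1 T} = g25 n"
proof (rule count_generic[where kk = kk1 and ext = ext1])
  show "\<not> bad good1 T \<longleftrightarrow> T = Leaf \<or> (\<exists>X. T = Node X () Leaf \<and> \<not> bad good1 X) \<or> kk1 T" for T
    by (rule valid_char) (auto intro: kk1_complete dest: kk1_ok simp: notbad_LeafR)
  show "kk1 T \<longleftrightarrow> (\<exists>X Y. T = Node X () (Node Y () Leaf) \<and> \<not> bad good1 X \<and> \<not> bad good1 Y) \<or> (\<exists>K. T = ext1 K \<and> kk1 K)" for T
    by (subst kk1.simps) blast
  show "kk1 T \<Longrightarrow> \<exists>X R. T = Node X () R \<and> R \<noteq> Leaf" for T by (rule kk1_shape)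
  show "kk1 K \<Longrightarrow> kk1 K' \<Longrightarrow> ext1 K = ext1 K' \<Longrightarrow> K = K'" for K K' by (simp add: ext1_def)
  show "kk1 K \<Longrightarrow> size (ext1 K) = Suc (size K)" for K by (simp add: ext1_def)
  show "kk1 K \<Longrightarrow> ext1 K \<noteq> Node X () (Node Y () Leaf)" for K X Y
    using kk1_shape[of K] by (auto simp: ext1_def)
qed

fun ext3 :: "unit tree \<Rightarrow> unit tree" where
  "ext3 Leaf = Leaf"
| "ext3 (Node X u R) = Node X () (Node Leaf () R)"

inductive kk3 :: "unit tree \<Rightarrow> bool" where
  kk3_base: "\<not> bad good3 X \<Longrightarrow> \<not> bad good3 Y \<Longrightarrow> kk3 (Node X () (Node Y () Leaf))"
| kk3_ext: "kk3 K \<Longrightarrow> kk3 (ext3 K)"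

lemma kk3_shape: "kk3 T \<Longrightarrow> \<exists>X R. T = Node X () R \<and> R \<noteq> Leaf"
proof (induction rule: kk3.induct)
  case (kk3_ext K) then show ?case by auto
qed auto

lemma kk3_ok: "kk3 T \<Longrightarrow> \<not> bad good3 T"
proof (induction rule: kk3.induct)
  case (kk3_base X Y)
  have "\<not> good3 (Node X () (Node Y () Leaf))" "\<not> good3 (Node Y () Leaf)" by (auto simp: good3_def)
  then show ?case using kk3_base by (simp add: bad_Node)
next
  case (kk3_ext K)
  obtain X R where K: "K = Node X () R" using kk3_shape[OF kk3_ext.hyps] by blast
  have "\<not> good3 (Node X () R)" using kk3_ext.IH K by (simp add: bad_Node)
  then have "\<not> good3 (Node X () (Node Leaf () R))" "\<not> good3 (Node Leaf () R)" by (auto simp: good3_def)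
  then show ?case using kk3_ext.IH K by (simp add: bad_Node)
qed

lemma kk3_complete: "\<not> bad good3 (Node X () R) \<Longrightarrow> R \<noteq> Leaf \<Longrightarrow> kk3 (Node X () R)"
proof (induction R)
  case Leaf then show ?case by simp
next
  case (Node Y u Z)
  show ?case
  proof (cases "Z = Leaf")
    case True
    then show ?thesis using Node.prems kk3_base[of X Y] by (auto simp: bad_Node)
  next
    case False
    have "Y \<noteq> Leaf \<Longrightarrow> good3 (Node X () (Node Y u Z))" using False by (simp add: good3_def)
    then have "Y = Leaf" using Node.prems(1) unfolding bad_Node by blast
    have "\<not> good3 (Node Leaf u Z)" using Node.prems(1) \<open>Y = Leaf\<close> by (simp add: bad_Node)
    then have "\<not> good3 (Node X () Z)" by (simp add: good3_def)
    then have "\<not> bad good3 (Node X () Z)" using Node.prems(1) \<open>Y = Leaf\<close> by (simp add: bad_Node)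
    then have "kk3 (Node X () Z)" using Node.IH(2) False by blast
    then show ?thesis using kk3_ext[of "Node X () Z"] \<open>Y = Leaf\<close> by auto
  qed
qed

lemma count3: "card {T :: unit tree. size T = n \<and> \<not> bad good3 T} = g25 n"
proof (rule count_generic[where kk = kk3 and ext = ext3])
  show "\<not> bad good3 T \<longleftrightarrow> T = Leaf \<or> (\<exists>X. T = Node X () Leaf \<and> \<not> bad good3 X) \<or> kk3 T" for T
    by (rule valid_char) (auto intro: kk3_complete dest: kk3_ok simp: notbad_LeafR)
  show "kk3 T \<longleftrightarrow> (\<exists>X Y. T = Node X () (Node Y () Leaf) \<and> \<not> bad good3 X \<and> \<not> bad good3 Y) \<or> (\<exists>K. T = ext3 K \<and> kk3 K)" for T
    by (subst kk3.simps) blast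
  show "kk3 T \<Longrightarrow> \<exists>X R. T = Node X () R \<and> R \<noteq> Leaf" for T by (rule kk3_shape)
  show "kk3 K \<Longrightarrow> kk3 K' \<Longrightarrow> ext3 K = ext3 K' \<Longrightarrow> K = K'" for K K'
    using kk3_shape[of K] kk3_shape[of K'] by auto
  show "kk3 K \<Longrightarrow> size (ext3 K) = Suc (size K)" for K using kk3_shape[of K] by auto
  show "kk3 K \<Longrightarrow> ext3 K \<noteq> Node X () (Node Y () Leaf)" for K X Y
    using kk3_shape[of K] by auto
qed

fun ext4 :: "unit tree \<Rightarrow> unit tree" where
  "ext4 (Node X u (Node Y v C)) = Node X () (Node Y () (Node Leaf () C))"
| "ext4 T = T"

inductive kk4 :: "unit tree \<Rightarrow> bool" where
  kk4_base: "\<not> bad good4 X \<Longrightarrow> \<not> bad good4 Y \<Longrightarrow> kk4 (Node X () (Node Y () Leaf))"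
| kk4_ext: "kk4 K \<Longrightarrow> kk4 (ext4 K)"

lemma kk4_shape: "kk4 T \<Longrightarrow> \<exists>X Y C. T = Node X () (Node Y () C)"
proof (induction rule: kk4.induct)
  case (kk4_ext K) then show ?case by auto
qed auto

lemma kk4_ok: "kk4 T \<Longrightarrow> \<not> bad good4 T"
proof (induction rule: kk4.induct)
  case (kk4_base X Y)
  have "\<not> good4 (Node X () (Node Y () Leaf))" "\<not> good4 (Node Y () Leaf)" by (auto simp: good4_def)
  then show ?case using kk4_base by (simp add: bad_Node)
next
  case (kk4_ext K)
  obtain X Y C where K: "K = Node X () (Node Y () C)" using kk4_shape[OF kk4_ext.hyps] by blast
  have "\<not> good4 (Node X () (Node Y () C))" "\<not> good4 (Node Y () C)" using kk4_ext.IH K by (simp_all add: bad_Node)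
  then have "\<not> good4 (Node X () (Node Y () (Node Leaf () C)))" "\<not> good4 (Node Y () (Node Leaf () C))"
     "\<not> good4 (Node Leaf () C)"
    by (auto simp: good4_def)
  then show ?case using kk4_ext.IH K by (simp add: bad_Node)
qed

lemma kk4_complete_aux: "\<not> bad good4 (Node X () (Node Y () C)) \<Longrightarrow> kk4 (Node X () (Node Y () C))"
proof (induction C)
  case Leaf then show ?case using kk4_base[of X Y] by (auto simp: bad_Node)
next
  case (Node Z u C')
  have "Z \<noteq> Leaf \<Longrightarrow> good4 (Node X () (Node Y () (Node Z u C')))" by (simp add: good4_def)
  then have "Z = Leaf" using Node.prems(1) unfolding bad_Node by blast
  have "\<not> good4 (Node Y () (Node Leaf u C'))" "\<not> good4 (Node Leaf u C')" using Node.prems(1) \<open>Z = Leaf\<close> by (simp_all add: bad_Node)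
  then have "\<not> good4 (Node X () (Node Y () C'))" "\<not> good4 (Node Y () C')" by (auto simp: good4_def)
  then have "\<not> bad good4 (Node X () (Node Y () C'))" using Node.prems(1) \<open>Z = Leaf\<close> by (simp add: bad_Node)
  then have "kk4 (Node X () (Node Y () C'))" using Node.IH(2) by blast
  then show ?case using kk4_ext[of "Node X () (Node Y () C')"] \<open>Z = Leaf\<close> by auto
qed

lemma kk4_complete: "\<not> bad good4 (Node X () R) \<Longrightarrow> R \<noteq> Leaf \<Longrightarrow> kk4 (Node X () R)"
  using kk4_complete_aux by (cases R) auto

lemma count4: "card {T :: unit tree. size T = n \<and> \<not> bad good4 T} = g25 n"
proof (rule count_generic[where kk = kk4 and ext = ext4])
  show "\<not> bad good4 T \<longleftrightarrow> T = Leaf \<or> (\<exists>X. T = Node X () Leaf \<and> \<not> bad good4 X) \<or> kk4 T" for T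
    by (rule valid_char) (auto intro: kk4_complete dest: kk4_ok simp: notbad_LeafR)
  show "kk4 T \<longleftrightarrow> (\<exists>X Y. T = Node X () (Node Y () Leaf) \<and> \<not> bad good4 X \<and> \<not> bad good4 Y) \<or> (\<exists>K. T = ext4 K \<and> kk4 K)" for T
    by (subst kk4.simps) blast
  show "kk4 T \<Longrightarrow> \<exists>X R. T = Node X () R \<and> R \<noteq> Leaf" for T using kk4_shape[of T] by auto
  show "kk4 K \<Longrightarrow> kk4 K' \<Longrightarrow> ext4 K = ext4 K' \<Longrightarrow> K = K'" for K K'
    using kk4_shape[of K] kk4_shape[of K'] by auto
  show "kk4 K \<Longrightarrow> size (ext4 K) = Suc (size K)" for K using kk4_shape[of K] by auto
  show "kk4 K \<Longrightarrow> ext4 K \<noteq> Node X () (Node Y () Leaf)" for K X Y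
    using kk4_shape[of K] by auto
qed

lemma mirror_eq_Node: "mirror S = Node l a r \<longleftrightarrow> S = Node (mirror r) a (mirror l)"
  by (cases S) auto

lemma good2_mirror: "good2 (mirror S) \<longleftrightarrow> good1 S"
proof
  assume "good2 (mirror S)"
  then obtain ll b lr a r where h: "mirror S = Node (Node ll b lr) a r" "ll \<noteq> Leaf" "r \<noteq> Leaf"
    unfolding good2_def by blast
  have "S = mirror (mirror S)" by simp
  also have "\<dots> = Node (mirror r) a (Node (mirror lr) b (mirror ll))" using h(1) by simp
  finally show "good1 S" unfolding good1_def using h(2,3) by auto
next
  assume "good1 S"
  then obtain l a rl c rr where h: "S = Node l a (Node rl c rr)" "l \<noteq> Leaf" "rr \<noteq> Leaf"
    unfolding good1_def by blast
  then show "good2 (mirror S)" unfolding good2_def by auto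
qed

lemma subtrees_mirror: "subtrees (mirror T) = mirror ` subtrees T"
  by (induction T) auto

lemma bad2_mirror: "bad good2 (mirror T) \<longleftrightarrow> bad good1 T"
proof -
  have "bad good2 (mirror T) \<longleftrightarrow> (\<exists>S\<in>subtrees T. good2 (mirror S))"
    unfolding bad_def subtrees_mirror by blast
  also have "\<dots> \<longleftrightarrow> bad good1 T" unfolding bad_def good2_mirror ..
  finally show ?thesis .
qed

lemma count2: "card {T :: unit tree. size T = n \<and> \<not> bad good2 T} = g25 n"
proof -
  let ?A = "{T :: unit tree. size T = n \<and> \<not> bad good1 T}"
  let ?B = "{T :: unit tree. size T = n \<and> \<not> bad good2 T}"
  have "mirror ` ?A = ?B"
  proof
    show "mirror ` ?A \<subseteq> ?B"
    proof
      fix T assume "T \<in> mirror ` ?A"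
      then obtain S where "T = mirror S" "size S = n" "\<not> bad good1 S" by blast
      then show "T \<in> ?B" using bad2_mirror[of S] by simp
    qed
    show "?B \<subseteq> mirror ` ?A"
    proof
      fix T :: "unit tree" assume h: "T \<in> ?B"
      have "bad good2 (mirror (mirror T)) \<longleftrightarrow> bad good1 (mirror T)" by (rule bad2_mirror)
      then have "mirror T \<in> ?A" using h by simp
      moreover have "T = mirror (mirror T)" by simp
      ultimately show "T \<in> mirror ` ?A" by blast
    qed
  qed
  moreover have "inj_on mirror ?A" by (rule inj_onI) (metis mirror_mirror)
  then have "card (mirror ` ?A) = card ?A" by (rule card_image)
  ultimately have "card ?B = card ?A" by simp
  then show ?thesis using count1 by simp
qed


lemma aux_rec: "a25242_aux (m + 3) = 2 * a25242_aux (m + 2) + a25242_aux (m + 1) + (\<Sum>i\<le>m. a25242_aux i * a25242_aux (m - i))"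
proof -
  have eq: "m + 3 = Suc (Suc (Suc m))" "m + 2 = Suc (Suc m)" "m + 1 = Suc m" by simp_all
  show ?thesis unfolding eq by (rule a25242_aux.simps(4))
qed

lemma a0: "a25242_aux 0 = 1" by simp
lemma a1: "a25242_aux 1 = 2" by (simp add: One_nat_def)
lemma a2: "a25242_aux 2 = 5" by (simp add: numeral_2_eq_2)
lemma a3: "a25242_aux 3 = 13" using aux_rec[of 0] a0 a1 a2 by simp
lemma a4: "a25242_aux 4 = 35" using aux_rec[of 1] a0 a1 a2 a3 by (simp add: atMost_nat_numeral)
lemma a5: "a25242_aux 5 = 97" using aux_rec[of 2] a0 a1 a2 a3 a4 by (simp add: atMost_nat_numeral)
lemma a6: "a25242_aux 6 = 275" using aux_rec[of 3] a0 a1 a2 a3 a4 a5 by (simp add: atMost_nat_numeral)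
lemma a7: "a25242_aux 7 = 794" using aux_rec[of 4] a0 a1 a2 a3 a4 a5 a6 by (simp add: atMost_nat_numeral)
lemma a8: "a25242_aux 8 = 2327" using aux_rec[of 5] a0 a1 a2 a3 a4 a5 a6 a7 by (simp add: atMost_nat_numeral)
lemma a9: "a25242_aux 9 = 6905" using aux_rec[of 6] a0 a1 a2 a3 a4 a5 a6 a7 a8 by (simp add: atMost_nat_numeral)

lemma vals: "map A025242 [1..<11] = [1,2,5,13,35,97,275,794,2327,6905]"
  by (simp add: A025242_def upt_rec a0 a1 a2 a3 a4 a5 a6 a7 a8 a9)


lemma avoiders_c_eq: "avoiders_c n tau xs = {T \<in> bsts n. \<not> contains T (pat_tree tau) (pat_e tau xs)}"
  by (simp add: avoiders_c_def avoiders_def)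

lemma av_eq:
  assumes "\<And>T. bst T \<Longrightarrow> contains T (pat_tree tau) (pat_e tau xs) \<longleftrightarrow> bad g T"
  shows "avoiders_c n tau xs = {T \<in> bsts n. \<not> bad g T}"
  unfolding avoiders_c_eq using assms bsts_bst by blast

lemma ma_eq: "(\<And>w. (\<forall>z\<in>Z. \<not> sublist z w) \<longleftrightarrow> \<not> PP w) \<Longrightarrow>
   motzkin_avoid m Z = {w \<in> {w. length w = m \<and> motzkin w}. \<not> PP w}"
  unfolding motzkin_avoid_def by auto

lemma bij_main:
  assumes n: "n \<ge> 1" and path: "\<And>T :: nat tree. bad g T \<longleftrightarrow> PP (fpath T)"
  shows "bij_betw fpath {T \<in> bsts n. \<not> bad g T} {w \<in> {w. length w = n - 1 \<and> motzkin w}. \<not> PP w}"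
  by (rule bij_restrict[OF bij_bsts[OF n]]) (simp add: path)

lemma card_main:
  assumes n: "n \<ge> 1" and path: "\<And>T :: unit tree. bad g T \<longleftrightarrow> PP (fpath T)"
  shows "card {w \<in> {w. length w = n - 1 \<and> motzkin w}. \<not> PP w} = card {T :: unit tree. size T = n \<and> \<not> bad g T}"
proof -
  have "bij_betw fpath {T \<in> {T :: unit tree. size T = n}. \<not> bad g T} {w \<in> {w. length w = n - 1 \<and> motzkin w}. \<not> PP w}"
    by (rule bij_restrict[OF bij_unit[OF n]]) (simp add: path)
  then show ?thesis using bij_betw_same_card by fastforce
qed

lemma Z1: "(\<forall>z\<in>{[U,U], [U,FR]}. \<not> sublist z w) \<longleftrightarrow> \<not> (sublist [U,U] w \<or> sublist [U,FR] w)" by auto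
lemma Z2: "(\<forall>z\<in>{[D,U], [D,FL]}. \<not> sublist z w) \<longleftrightarrow> \<not> (sublist [D,U] w \<or> sublist [D,FL] w)" by auto
lemma Z3: "(\<forall>z\<in>{[U,U], [FR,U]}. \<not> sublist z w) \<longleftrightarrow> \<not> (sublist [U,U] w \<or> sublist [FR,U] w)" by auto
lemma Z4: "(\<forall>z\<in>{[x,y,z] | x y z. x \<in> {U,FR} \<and> y \<in> {U,FR} \<and> z \<in> {U,FL}}. \<not> sublist z w) \<longleftrightarrow> \<not> Q4 w"
  unfolding Q4_def by blast

lemma c1: "bst T \<Longrightarrow> contains T (pat_tree [2,1,3,4]) (pat_e [2,1,3,4] [x2,True,x4]) \<longleftrightarrow> bad good1 T"
  using c1_dest c1_intro by blast
lemma c2: "bst T \<Longrightarrow> contains T (pat_tree [3,2,1,4]) (pat_e [3,2,1,4] [True,x3,x4]) \<longleftrightarrow> bad good2 T"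
  using c2_dest c2_intro by blast
lemma c3: "bst T \<Longrightarrow> contains T (pat_tree [1,3,2,4]) (pat_e [1,3,2,4] [True,x3,x4]) \<longleftrightarrow> bad good3 T"
  using c3_dest c3_intro by blast
lemma c4: "bst T \<Longrightarrow> contains T (pat_tree [1,2,4,3]) (pat_e [1,2,4,3] [True,x3,x4]) \<longleftrightarrow> bad good4 T"
  using c4_dest c4_intro by blast

theorem theorem12:
  fixes n :: nat
  assumes "n \<ge> 1"
  shows
    "bij_betw fpath (avoiders_c n [2,1,3,4] [True,True,True])
                    (motzkin_avoid (n - 1) {[U,U], [U,FR]})
   \<and> bij_betw fpath (avoiders_c n [3,2,1,4] [True,True,True])
                    (motzkin_avoid (n - 1) {[D,U], [D,FL]})
   \<and> bij_betw fpath (avoiders_c n [1,3,2,4] [True,True,True])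
                    (motzkin_avoid (n - 1) {[U,U], [FR,U]})
   \<and> bij_betw fpath (avoiders_c n [1,2,4,3] [True,True,True])
                    (motzkin_avoid (n - 1)
                       {[x,y,z] | x y z. x \<in> {U,FR} \<and> y \<in> {U,FR} \<and> z \<in> {U,FL}})
   \<and> (\<forall>x2 x4. avoiders_c n [2,1,3,4] [x2,True,x4] = avoiders_c n [2,1,3,4] [True,True,True])
   \<and> (\<forall>x3 x4. avoiders_c n [3,2,1,4] [True,x3,x4] = avoiders_c n [3,2,1,4] [True,True,True])
   \<and> (\<forall>x3 x4. avoiders_c n [1,3,2,4] [True,x3,x4] = avoiders_c n [1,3,2,4] [True,True,True])
   \<and> (\<forall>x3 x4. avoiders_c n [1,2,4,3] [True,x3,x4] = avoiders_c n [1,2,4,3] [True,True,True])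
   \<and> card (motzkin_avoid (n - 1) {[U,U], [U,FR]}) = card (motzkin_avoid (n - 1) {[D,U], [D,FL]})
   \<and> card (motzkin_avoid (n - 1) {[D,U], [D,FL]}) = card (motzkin_avoid (n - 1) {[U,U], [FR,U]})
   \<and> card (motzkin_avoid (n - 1) {[U,U], [FR,U]}) =
       card (motzkin_avoid (n - 1)
               {[x,y,z] | x y z. x \<in> {U,FR} \<and> y \<in> {U,FR} \<and> z \<in> {U,FL}})
   \<and> card (motzkin_avoid (n - 1) {[U,U], [U,FR]}) = A025242 n
   \<and> map A025242 [1..<11] = [1,2,5,13,35,97,275,794,2327,6905]"
proof -
  have n: "n \<ge> 1" by (rule assms)
  have av1: "avoiders_c n [2,1,3,4] [x2,True,x4] = {T \<in> bsts n. \<not> bad good1 T}" for x2 x4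
    by (rule av_eq) (rule c1)
  have av2: "avoiders_c n [3,2,1,4] [True,x3,x4] = {T \<in> bsts n. \<not> bad good2 T}" for x3 x4
    by (rule av_eq) (rule c2)
  have av3: "avoiders_c n [1,3,2,4] [True,x3,x4] = {T \<in> bsts n. \<not> bad good3 T}" for x3 x4
    by (rule av_eq) (rule c3)
  have av4: "avoiders_c n [1,2,4,3] [True,x3,x4] = {T \<in> bsts n. \<not> bad good4 T}" for x3 x4
    by (rule av_eq) (rule c4)
  have m1: "motzkin_avoid (n - 1) {[U,U], [U,FR]} = {w \<in> {w. length w = n - 1 \<and> motzkin w}. \<not> (sublist [U,U] w \<or> sublist [U,FR] w)}"
    by (rule ma_eq) (rule Z1)
  have m2: "motzkin_avoid (n - 1) {[D,U], [D,FL]} = {w \<in> {w. length w = n - 1 \<and> motzkin w}. \<not> (sublist [D,U] w \<or> sublist [D,FL] w)}"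
    by (rule ma_eq) (rule Z2)
  have m3: "motzkin_avoid (n - 1) {[U,U], [FR,U]} = {w \<in> {w. length w = n - 1 \<and> motzkin w}. \<not> (sublist [U,U] w \<or> sublist [FR,U] w)}"
    by (rule ma_eq) (rule Z3)
  have m4: "motzkin_avoid (n - 1) {[x,y,z] | x y z. x \<in> {U,FR} \<and> y \<in> {U,FR} \<and> z \<in> {U,FL}} = {w \<in> {w. length w = n - 1 \<and> motzkin w}. \<not> Q4 w}"
    by (rule ma_eq) (rule Z4)
  have b1: "bij_betw fpath (avoiders_c n [2,1,3,4] [True,True,True]) (motzkin_avoid (n - 1) {[U,U], [U,FR]})"
    unfolding av1 m1 by (rule bij_main[OF n]) (rule path1[symmetric])
  have b2: "bij_betw fpath (avoiders_c n [3,2,1,4] [True,True,True]) (motzkin_avoid (n - 1) {[D,U], [D,FL]})"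
    unfolding av2 m2 by (rule bij_main[OF n]) (rule path2[symmetric])
  have b3: "bij_betw fpath (avoiders_c n [1,3,2,4] [True,True,True]) (motzkin_avoid (n - 1) {[U,U], [FR,U]})"
    unfolding av3 m3 by (rule bij_main[OF n]) (rule path3[symmetric])
  have b4: "bij_betw fpath (avoiders_c n [1,2,4,3] [True,True,True]) (motzkin_avoid (n - 1) {[x,y,z] | x y z. x \<in> {U,FR} \<and> y \<in> {U,FR} \<and> z \<in> {U,FL}})"
    unfolding av4 m4 by (rule bij_main[OF n]) (rule path4[symmetric])
  have k1: "card (motzkin_avoid (n - 1) {[U,U], [U,FR]}) = g25 n"
    unfolding m1 using card_main[OF n, of good1, OF path1[symmetric]] count1 by simp
  have k2: "card (motzkin_avoid (n - 1) {[D,U], [D,FL]}) = g25 n"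
    unfolding m2 using card_main[OF n, of good2, OF path2[symmetric]] count2 by simp
  have k3: "card (motzkin_avoid (n - 1) {[U,U], [FR,U]}) = g25 n"
    unfolding m3 using card_main[OF n, of good3, OF path3[symmetric]] count3 by simp
  have k4: "card (motzkin_avoid (n - 1) {[x,y,z] | x y z. x \<in> {U,FR} \<and> y \<in> {U,FR} \<and> z \<in> {U,FL}}) = g25 n"
    unfolding m4 using card_main[OF n, of good4, OF path4[symmetric]] count4 by simp
  have A: "A025242 n = g25 n" using n by (simp add: A025242_def g25_def)
  show ?thesis
    using b1 b2 b3 b4 k1 k2 k3 k4 A vals
    by (simp only: av1 av2 av3 av4) simp
qed


end
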